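(* Let $M$, $\alpha,\beta,\gamma$ satisfy the standing assumptions described in the context, let $T>0$ and $b$ be as fixed in the context, let $N>0$, and for $\xi\in\mathbb{R}^n$ let $W(t,\xi)\in\mathbb{C}^2$ be any solution on $[T,\infty)$ of $$\partial_t W=\begin{pmatrix}-2b(t)& i|\xi|\\ i|\xi|&0\end{pmatrix}W .$$ Then there exists a positive constant $K_2$ such that, for all $(t,\xi)\in Z_\Psi$ with $\xi\ne0$: if $\alpha>0$, then $K_2^{-1}|W(T,\xi)|\le|W(t,\xi)|\le K_2|W(T,\xi)|$; if $\alpha\le0$, then $K_2^{-1}|W(t_\xi,\xi)|\le|W(t,\xi)|\le K_2|W(t_\xi,\xi)|$.
   Context: Standing assumptions: $M:[0,\infty)\to\mathbb{R}$ continuous; $\alpha\le1$, $\beta<1$, $\gamma>0$ with $\gamma\ge\beta\ge(\alpha+1)/2$ if $\alpha\ne0$ and $\gamma\ge\beta>1/2$ if $\alpha=0$; $M$ satisfies: (M1) if $\alpha\ge 0$, $\int_0^t\big|\int_s^\infty\int_\sigma^\infty M(\tau)\,d\tau\,d\sigma\big|\,ds\lesssim(1+t)^{\alpha}$; if $\alpha\le 0$, $\int_t^\infty\big|\int_s^\infty\int_\sigma^\infty M(\tau)\,d\tau\,d\sigma\big|\,ds\lesssim(1+t)^{\alpha}$ (both when $\alpha=0$); (M2) $|M(t)|\lesssim(1+t)^{-2\beta}$; (M3) $\big|\int_t^\infty M\big|\lesssim(1+t)^{-\gamma}$, $\int_t^\infty\big(\int_s^\infty M\big)^2ds\lesssim(1+t)^{-\gamma}$,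 $\int_0^\infty\int_t^\infty\big(\int_s^\infty M\big)^2\,ds\,dt<\infty$; and $\sup_{t\ge0}(1+t)^\alpha\int_t^\infty\int_s^\infty(\int_\sigma^\infty M)^2\,d\sigma\,ds<\infty$; here $f\lesssim g$ means $f\le Cg$ with $C$ independent of $t$. Definition of $b$ and $T$: $q_1:=M$, $Q_k(t):=-\int_t^\infty q_k$, $q_k:=\sum_{j=1}^{k-1}Q_jQ_{k-j}$ ($k\ge2$), $\phi(t):=-\int_t^\infty Q_2$; $T>0$ is chosen so that $|\int_t^\infty Q_1(s)\,ds|\le1$ and $\phi(t)\le6^{-4}$ for all $t\ge T$, and $b(t):=\sum_{k\ge1}Q_k(t)$ on $[T,\infty)$. Zones: $Z_\Psi:=\{(t,\xi)\in[T,\infty)\times\mathbb{R}^n:(1+t)^\alpha|\xi|\le N\}$; for $\alpha\ne0$, $\xi\ne0$, $t_\xi:=\max\{T,(N|\xi|^{-1})^{1/\alpha}-1\}$, and for $\alpha=0$ set $t_\xi:=T$. *)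

theory Defs
  imports "HOL-Analysis.Analysis"
begin

definition has_tail :: "(real \<Rightarrow> real) \<Rightarrow> real \<Rightarrow> bool" where
  "has_tail f t \<longleftrightarrow> (\<forall>R\<ge>t. f integrable_on {t..R}) \<and>
                     (\<exists>L. ((\<lambda>R. integral {t..R} f) \<longlongrightarrow> L) at_top)"

definition tail :: "(real \<Rightarrow> real) \<Rightarrow> real \<Rightarrow> real" where
  "tail f t = Lim at_top (\<lambda>R. integral {t..R} f)"

function Qk :: "(real \<Rightarrow> real) \<Rightarrow> nat \<Rightarrow> real \<Rightarrow> real" where
  "Qk M 0 t = 0"
| "Qk M (Suc 0) t = - tail M t"
| "Qk M (Suc (Suc n)) t =
     - tail (\<lambda>s. \<Sum>j\<in>{1..Suc n}. Qk M j s * Qk M (Suc (Suc n) - j) s) t"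
  by pat_completeness auto
termination
  by (relation "Wellfounded.measure (\<lambda>(M, k, t). k)") auto

definition phi :: "(real \<Rightarrow> real) \<Rightarrow> real \<Rightarrow> real" where
  "phi M t = - tail (Qk M 2) t"

definition bcoef :: "(real \<Rightarrow> real) \<Rightarrow> real \<Rightarrow> real" where
  "bcoef M t = (\<Sum>k. Qk M (Suc k) t)"

definition standing_assumptions ::
  "(real \<Rightarrow> real) \<Rightarrow> real \<Rightarrow> real \<Rightarrow> real \<Rightarrow> bool" where
  "standing_assumptions M \<alpha> \<beta> \<gamma> \<longleftrightarrow>
    (let I1 = tail M; I2 = tail I1; J = tail (\<lambda>s. (I1 s)\<^sup>2) in
     continuous_on {0..} M \<and>
     \<alpha> \<le> 1 \<and> \<beta> < 1 \<and> \<gamma> > 0 \<and>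
     (\<alpha> \<noteq> 0 \<longrightarrow> \<gamma> \<ge> \<beta> \<and> \<beta> \<ge> (\<alpha> + 1) / 2) \<and>
     (\<alpha> = 0 \<longrightarrow> \<gamma> \<ge> \<beta> \<and> \<beta> > 1 / 2) \<and>
     \<comment> \<open>the improper integrals occurring in (M1)-(M3) exist\<close>
     (\<forall>t\<ge>0. has_tail M t \<and> has_tail I1 t) \<and>
     \<comment> \<open>(M1)\<close>
     (\<alpha> \<ge> 0 \<longrightarrow> (\<exists>C. \<forall>t\<ge>0. integral {0..t} (\<lambda>s. \<bar>I2 s\<bar>) \<le> C * (1 + t) powr \<alpha>)) \<and>
     (\<alpha> \<le> 0 \<longrightarrow> (\<exists>C. \<forall>t\<ge>0. has_tail (\<lambda>s. \<bar>I2 s\<bar>) t \<and>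
                             tail (\<lambda>s. \<bar>I2 s\<bar>) t \<le> C * (1 + t) powr \<alpha>)) \<and>
     \<comment> \<open>(M2)\<close>
     (\<exists>C. \<forall>t\<ge>0. \<bar>M t\<bar> \<le> C * (1 + t) powr (- 2 * \<beta>)) \<and>
     \<comment> \<open>(M3)\<close>
     (\<exists>C. \<forall>t\<ge>0. \<bar>I1 t\<bar> \<le> C * (1 + t) powr (- \<gamma>)) \<and>
     (\<exists>C. \<forall>t\<ge>0. has_tail (\<lambda>s. (I1 s)\<^sup>2) t \<and> J t \<le> C * (1 + t) powr (- \<gamma>)) \<and>
     has_tail J 0 \<and>
     \<comment> \<open>\<open>sup_t (1+t)^\<alpha> \<integral>_t^\<infinity>\<integral>_s^\<infinity>(\<integral>_\<sigma>^\<infinity>M)^2 < \<infinity>\<close>\<close>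
     (\<exists>C. \<forall>t\<ge>0. has_tail J t \<and> (1 + t) powr \<alpha> * tail J t \<le> C))"

definition admissible_T :: "(real \<Rightarrow> real) \<Rightarrow> real \<Rightarrow> bool" where
  "admissible_T M T \<longleftrightarrow> T > 0 \<and>
     (\<forall>t\<ge>T. \<bar>tail (Qk M 1) t\<bar> \<le> 1 \<and> phi M t \<le> 6 powr (-4))"

definition sysmat :: "(real \<Rightarrow> real) \<Rightarrow> real \<Rightarrow> real \<Rightarrow> complex^2^2" where
  "sysmat b r t = vector [vector [- 2 * complex_of_real (b t), \<i> * complex_of_real r],
                          vector [\<i> * complex_of_real r, 0]]"

definition in_Zpsi :: "real \<Rightarrow> real \<Rightarrow> real \<Rightarrow> real \<Rightarrow> 'n::real_normed_vector \<Rightarrow> bool" where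
  "in_Zpsi \<alpha> T N t \<xi> \<longleftrightarrow> t \<ge> T \<and> (1 + t) powr \<alpha> * norm \<xi> \<le> N"

definition t_xi :: "real \<Rightarrow> real \<Rightarrow> real \<Rightarrow> 'n::real_normed_vector \<Rightarrow> real" where
  "t_xi \<alpha> T N \<xi> = (if \<alpha> = 0 then T else max T ((N / norm \<xi>) powr (1 / \<alpha>) - 1))"

end

theory Submission
  imports Defs
begin


lemma tail_tendsto:
  assumes "has_tail f t"
  shows "((\<lambda>R. integral {t..R} f) \<longlongrightarrow> tail f t) at_top"
proof -
  obtain L where L: "((\<lambda>R. integral {t..R} f) \<longlongrightarrow> L) at_top"
    using assms unfolding has_tail_def by blast
  then have "tail f t = L" unfolding tail_def by (simp add: tendsto_Lim)
  with L show ?thesis by simp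
qed

lemma tail_unique:
  assumes "((\<lambda>R. integral {t..R} f) \<longlongrightarrow> L) at_top"
  shows "tail f t = L"
  using assms unfolding tail_def by (simp add: tendsto_Lim)

lemma has_tail_intro:
  assumes "\<And>R. R \<ge> t \<Longrightarrow> f integrable_on {t..R}"
    and "((\<lambda>R. integral {t..R} f) \<longlongrightarrow> L) at_top"
  shows "has_tail f t" "tail f t = L"
  using assms tail_unique unfolding has_tail_def by blast+

lemma has_tail_shift:
  assumes "has_tail f s" "s \<le> R"
  shows "has_tail f R" "tail f s = integral {s..R} f + tail f R"
proof -
  have int: "\<And>R'. R' \<ge> s \<Longrightarrow> f integrable_on {s..R'}"
    using assms unfolding has_tail_def by blast
  have intR: "f integrable_on {R..R'}" if "R' \<ge> R" for R'
    using integrable_subinterval_real[OF int[of R'], where c=R and d=R'] that assms(2) by auto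
  have ev: "\<forall>\<^sub>F R' in at_top. integral {s..R'} f - integral {s..R} f = integral {R..R'} f"
    using eventually_ge_at_top[of R]
  proof (rule eventually_mono)
    fix R' assume "R \<le> R'"
    then show "integral {s..R'} f - integral {s..R} f = integral {R..R'} f"
      using Henstock_Kurzweil_Integration.integral_combine[of s R R' f] int[of R'] assms(2) by simp
  qed
  have "((\<lambda>R'. integral {s..R'} f - integral {s..R} f) \<longlongrightarrow> tail f s - integral {s..R} f) at_top"
    by (intro tendsto_diff tail_tendsto assms tendsto_const)
  then have lim: "((\<lambda>R'. integral {R..R'} f) \<longlongrightarrow> tail f s - integral {s..R} f) at_top"
    using ev by (rule Lim_transform_eventually)
  show "has_tail f R" using has_tail_intro(1)[OF intR lim] by simp
  show "tail f s = integral {s..R} f + tail f R" using has_tail_intro(2)[OF intR lim] by simp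
qed

lemma tail_eq_int:
  assumes "has_tail f a" "a \<le> x"
  shows "tail f x = tail f a - integral {a..x} f"
  using has_tail_shift[OF assms] by simp

lemma tail_deriv:
  assumes "has_tail f a" "continuous_on {a..b} f" "x \<in> {a..b}"
  shows "(tail f has_real_derivative - f x) (at x within {a..b})"
proof -
  have "((\<lambda>u. tail f a - integral {a..u} f) has_real_derivative 0 - f x) (at x within {a..b})"
    by (intro DERIV_diff DERIV_const integral_has_real_derivative assms)
  then have "((\<lambda>u. tail f a - integral {a..u} f) has_real_derivative - f x) (at x within {a..b})"
    by simp
  then show ?thesis
    by (rule has_field_derivative_transform_within[where d=1])
       (use assms in \<open>auto intro: tail_eq_int[symmetric]\<close>)
qed

lemma tail_cont:
  assumes "has_tail f a" "continuous_on {a..b} f"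
  shows "continuous_on {a..b} (tail f)"
proof -
  have "continuous_on {a..b} (\<lambda>u. tail f a - integral {a..u} f)"
    by (intro continuous_intros indefinite_integral_continuous_1 integrable_continuous_real assms)
  then show ?thesis
    by (rule continuous_on_eq) (use assms in \<open>auto intro: tail_eq_int[symmetric]\<close>)
qed

lemma tail_lin:
  assumes "has_tail f t" "has_tail g t"
  shows "has_tail (\<lambda>s. a * f s + b * g s) t" "tail (\<lambda>s. a * f s + b * g s) t = a * tail f t + b * tail g t"
proof -
  have int: "\<And>R. R \<ge> t \<Longrightarrow> (\<lambda>s. a * f s + b * g s) integrable_on {t..R}"
    using assms unfolding has_tail_def
    by (auto intro!: integrable_add integrable_on_mult_right)
  have ev: "\<forall>\<^sub>F R in at_top. a * integral {t..R} f + b * integral {t..R} g = integral {t..R} (\<lambda>s. a * f s + b * g s)"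
    using eventually_ge_at_top[of t]
  proof (rule eventually_mono)
    fix R assume "t \<le> R"
    then have "f integrable_on {t..R}" "g integrable_on {t..R}" using assms unfolding has_tail_def by auto
    then show "a * integral {t..R} f + b * integral {t..R} g = integral {t..R} (\<lambda>s. a * f s + b * g s)"
      by (simp add: integral_add integrable_on_mult_right)
  qed
  have "((\<lambda>R. a * integral {t..R} f + b * integral {t..R} g) \<longlongrightarrow> a * tail f t + b * tail g t) at_top"
    by (intro tendsto_intros tail_tendsto assms)
  then have lim: "((\<lambda>R. integral {t..R} (\<lambda>s. a * f s + b * g s)) \<longlongrightarrow> a * tail f t + b * tail g t) at_top"
    using ev by (rule Lim_transform_eventually)
  show "has_tail (\<lambda>s. a * f s + b * g s) t" using has_tail_intro(1)[OF int lim] .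
  show "tail (\<lambda>s. a * f s + b * g s) t = a * tail f t + b * tail g t" using has_tail_intro(2)[OF int lim] .
qed

lemma tail_le:
  assumes "has_tail f t" "has_tail g t" "\<And>s. s \<ge> t \<Longrightarrow> f s \<le> g s"
  shows "tail f t \<le> tail g t"
proof (rule tendsto_le[OF _ tail_tendsto[OF assms(2)] tail_tendsto[OF assms(1)]])
  show "\<forall>\<^sub>F R in at_top. integral {t..R} f \<le> integral {t..R} g"
    using eventually_ge_at_top[of t]
    by eventually_elim (use assms in \<open>auto simp: has_tail_def intro!: integral_le\<close>)
qed simp

lemma tail_abs_le:
  assumes "has_tail f t" "has_tail g t" "\<And>s. s \<ge> t \<Longrightarrow> \<bar>f s\<bar> \<le> g s"
  shows "\<bar>tail f t\<bar> \<le> tail g t"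
proof -
  have "tail f t \<le> tail g t" using assms by (intro tail_le) (auto simp: abs_le_iff)
  moreover have "- tail f t \<le> tail g t"
  proof -
    have e: "(\<lambda>s. (-1) * f s + 0 * f s) = (\<lambda>s. - f s)" by (rule ext) simp
    have h: "has_tail (\<lambda>s. - f s) t" "tail (\<lambda>s. - f s) t = - tail f t"
      using tail_lin[OF assms(1) assms(1), of "-1" 0] unfolding e by auto
    have "tail (\<lambda>s. - f s) t \<le> tail g t"
      by (rule tail_le[OF h(1) assms(2)]) (use assms(3) in \<open>auto simp: abs_le_iff\<close>)
    then show ?thesis using h(2) by simp
  qed
  ultimately show ?thesis by auto
qed

lemma tail_nonneg:
  assumes "has_tail f t" "\<And>s. s \<ge> t \<Longrightarrow> 0 \<le> f s"
  shows "0 \<le> tail f t"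
proof (rule tendsto_le[OF _ tail_tendsto[OF assms(1)] tendsto_const])
  show "\<forall>\<^sub>F R in at_top. 0 \<le> integral {t..R} f"
    using eventually_ge_at_top[of t]
    by eventually_elim (use assms in \<open>auto simp: has_tail_def intro!: integral_nonneg\<close>)
qed simp

lemma integral_le_tail:
  assumes "has_tail f t" "\<And>s. s \<ge> t \<Longrightarrow> 0 \<le> f s" "t \<le> R"
  shows "integral {t..R} f \<le> tail f t"
  using has_tail_shift[OF assms(1,3)] tail_nonneg[of f R] assms by auto

lemma tail_mono:
  assumes "has_tail f t" "\<And>s. s \<ge> t \<Longrightarrow> 0 \<le> f s" "t \<le> R"
  shows "tail f R \<le> tail f t"
proof -
  have "0 \<le> integral {t..R} f"
    using assms unfolding has_tail_def by (auto intro!: integral_nonneg)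
  then show ?thesis using has_tail_shift[OF assms(1,3)] by auto
qed

lemma has_tail_nonneg_bounded:
  assumes int: "\<And>R. R \<ge> t \<Longrightarrow> f integrable_on {t..R}"
    and nn: "\<And>s. s \<ge> t \<Longrightarrow> 0 \<le> f s"
    and bd: "\<And>R. R \<ge> t \<Longrightarrow> integral {t..R} f \<le> B"
  shows "has_tail f t"
proof -
  define F where "F R = integral {t..R} f" for R
  have mono: "F R1 \<le> F R2" if "t \<le> R1" "R1 \<le> R2" for R1 R2
  proof -
    have "F R2 = F R1 + integral {R1..R2} f"
      unfolding F_def using Henstock_Kurzweil_Integration.integral_combine[of t R1 R2 f] int[of R2] that by simp
    moreover have "0 \<le> integral {R1..R2} f"
      using integrable_subinterval_real[OF int[of R2], where c=R1 and d=R2] that nn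
      by (intro integral_nonneg) auto
    ultimately show ?thesis by simp
  qed
  define S where "S = Sup (F ` {t..})"
  have bdd: "bdd_above (F ` {t..})" using bd unfolding F_def by (auto intro!: bdd_aboveI)
  have "(F \<longlongrightarrow> S) at_top"
  proof (rule order_tendstoI)
    fix a assume "a < S"
    then obtain R0 where R0: "R0 \<in> {t..}" "a < F R0"
      unfolding S_def using less_cSup_iff[OF _ bdd] by auto
    show "\<forall>\<^sub>F R in at_top. a < F R"
      using eventually_ge_at_top[of R0]
      by eventually_elim (use R0 mono in \<open>fastforce\<close>)
  next
    fix a assume "S < a"
    show "\<forall>\<^sub>F R in at_top. F R < a"
      using eventually_ge_at_top[of t]
    proof eventually_elim
      case (elim R)
      then have "F R \<le> S" unfolding S_def by (intro cSup_upper bdd) auto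
      then show ?case using \<open>S < a\<close> by simp
    qed
  qed
  then show ?thesis unfolding has_tail_def F_def using int by blast
qed

lemma has_tail_comparison:
  assumes int: "\<And>R. R \<ge> t \<Longrightarrow> f integrable_on {t..R}"
    and le: "\<And>s. s \<ge> t \<Longrightarrow> \<bar>f s\<bar> \<le> g s"
    and g: "has_tail g t"
  shows "has_tail f t"
proof -
  have gint: "\<And>R. R \<ge> t \<Longrightarrow> g integrable_on {t..R}" using g unfolding has_tail_def by auto
  have gnn: "\<And>s. s \<ge> t \<Longrightarrow> 0 \<le> g s" using le by (meson abs_ge_zero order_trans)
  have "has_tail (\<lambda>s. f s + g s) t"
  proof (rule has_tail_nonneg_bounded[where B="2 * tail g t"])
    fix R assume R: "R \<ge> t"
    show "(\<lambda>s. f s + g s) integrable_on {t..R}" using int gint R by (intro integrable_add)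
    have "integral {t..R} f \<le> integral {t..R} g"
      using int gint R le by (intro integral_le) (auto simp: abs_le_iff)
    moreover have "integral {t..R} g \<le> tail g t" using integral_le_tail[OF g gnn R] .
    ultimately show "integral {t..R} (\<lambda>s. f s + g s) \<le> 2 * tail g t"
      using int gint R by (simp add: integral_add)
  next
    fix s assume "s \<ge> t" then show "0 \<le> f s + g s" using le[of s] by (simp add: abs_le_iff)
  qed
  note h = this
  have e: "(\<lambda>s. 1 * (f s + g s) + (-1) * g s) = f" by (rule ext) simp
  show ?thesis using tail_lin(1)[OF h g, of 1 "-1"] unfolding e .
qed


definition eps0 :: real where "eps0 = 1/36"

function cseq :: "nat \<Rightarrow> real" where
  "cseq 0 = 1"
| "cseq (Suc m) = 2 * eps0 * cseq m + eps0^2 * (\<Sum>i<m. cseq i * cseq (m - 1 - i))"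
  by pat_completeness auto
termination by (relation "Wellfounded.measure id") auto

lemma cseq_nonneg: "0 \<le> cseq n"
proof (induction n rule: less_induct)
  case (less n)
  show ?case
  proof (cases n)
    case 0 then show ?thesis by simp
  next
    case (Suc m)
    have "0 \<le> (\<Sum>i<m. cseq i * cseq (m - 1 - i))"
      using less Suc by (intro sum_nonneg mult_nonneg_nonneg) auto
    then show ?thesis using less[of m] Suc by (simp add: eps0_def)
  qed
qed

lemma conv_le:
  fixes c :: "nat \<Rightarrow> real"
  assumes nn: "\<And>i. 0 \<le> c i"
  shows "(\<Sum>i<n. \<Sum>l<i. c l * c (i - 1 - l)) \<le> (\<Sum>i<n. c i)^2"
proof (cases n)
  case 0 then show ?thesis by simp
next
  case (Suc n')
  have "(\<Sum>i<n. \<Sum>l<i. c l * c (i - 1 - l)) = (\<Sum>k<n'. \<Sum>l\<le>k. c l * c (k - l))"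
  proof -
    have "(\<Sum>i<n. \<Sum>l<i. c l * c (i - 1 - l)) = (\<Sum>l<0. c l * c (0 - 1 - l)) + (\<Sum>k<n'. \<Sum>l<Suc k. c l * c (Suc k - 1 - l))"
      unfolding Suc by (rule sum.lessThan_Suc_shift)
    also have "\<dots> = (\<Sum>k<n'. \<Sum>l\<le>k. c l * c (k - l))"
      by (simp only: lessThan_Suc_atMost lessThan_0 sum.empty add_0_left diff_Suc_1)
    finally show ?thesis .
  qed
  also have "\<dots> = (\<Sum>(l,j)\<in>{(l,j). l+j < n'}. c l * c j)"
    by (rule sum.triangle_reindex[symmetric])
  also have "\<dots> \<le> (\<Sum>(l,j)\<in>{..<n'} \<times> {..<n'}. c l * c j)"
    by (rule sum_mono2) (auto intro: mult_nonneg_nonneg nn)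
  also have "\<dots> = (\<Sum>i<n'. c i)^2"
    by (simp add: power2_eq_square sum_product sum.cartesian_product)
  also have "\<dots> \<le> (\<Sum>i<n. c i)^2"
    using nn unfolding Suc by (intro power_mono sum_mono2 sum_nonneg) auto
  finally show ?thesis .
qed

lemma cseq_partial: "(\<Sum>i<n. cseq i) \<le> 2"
proof (induction n)
  case 0 then show ?case by simp
next
  case (Suc n)
  have S0: "0 \<le> (\<Sum>i<n. cseq i)" by (intro sum_nonneg cseq_nonneg)
  have "(\<Sum>i<Suc n. cseq i) = 1 + (\<Sum>i<n. cseq (Suc i))"
    by (subst sum.lessThan_Suc_shift) simp
  also have "\<dots> = 1 + 2 * eps0 * (\<Sum>i<n. cseq i) + eps0^2 * (\<Sum>i<n. \<Sum>l<i. cseq l * cseq (i - 1 - l))"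
    by (simp add: sum.distrib sum_distrib_left)
  also have "\<dots> \<le> 1 + 2 * eps0 * 2 + eps0^2 * 2^2"
  proof -
    have "(\<Sum>i<n. \<Sum>l<i. cseq l * cseq (i - 1 - l)) \<le> 2^2"
      using conv_le[of cseq n, OF cseq_nonneg] power_mono[OF Suc.IH S0, of 2] by linarith
    then show ?thesis using Suc.IH
      by (intro add_mono mult_left_mono) (auto simp: eps0_def)
  qed
  also have "\<dots> \<le> 2" by (simp add: eps0_def power2_eq_square)
  finally show ?case .
qed

lemma cseq_summable: "summable cseq" and cseq_suminf: "suminf cseq \<le> 2"
  using summableI_nonneg_bounded[OF cseq_nonneg cseq_partial]
    suminf_le_const[OF _ cseq_partial] by auto


lemma two_abs_mult_le: "2 * abs (u * v) \<le> u^2 + (v::real)^2"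
proof -
  have "0 \<le> (u - v)^2" "0 \<le> (u + v)^2" by auto
  then show ?thesis by (auto simp: abs_mult abs_if power2_eq_square algebra_simps)
qed

lemma core_pointwise:
  fixes x1 y1 x2 y2 B bb I1 I2 h r :: real
  assumes E: "E = x1^2 + y1^2 + x2^2 + y2^2" "0 < E" and P: "P = x1^2 + y1^2"
    and r: "0 \<le> r" and I2: "\<bar>I2\<bar> \<le> 1" and hb: "\<bar>bb + I1\<bar> \<le> h"
  shows "\<bar>-4*(bb + I1)*(P/E) + 4*I2*(-4*bb*(P/E)*(1 - P/E) + 2*r*(y1*x2 - x1*y2)/E)\<bar>
           \<le> 8*h + 4*\<bar>I1\<bar>*\<bar>I2\<bar> + 4*r*\<bar>I2\<bar>"
proof -
  define f where "f = P/E"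
  have f01: "0 \<le> f" "f \<le> 1" using E P unfolding f_def by (auto simp: field_simps)
  have ff: "\<bar>4*bb*f*(1-f)\<bar> \<le> \<bar>bb\<bar>"
  proof -
    have "0 \<le> (2*f - 1)^2" by auto
    then have "4*f*(1-f) \<le> 1" by (simp add: power2_eq_square algebra_simps)
    moreover have "0 \<le> 4*f*(1-f)" using f01 by auto
    ultimately have "\<bar>4*f*(1-f)\<bar> \<le> 1" by auto
    then have "\<bar>bb\<bar> * \<bar>4*f*(1-f)\<bar> \<le> \<bar>bb\<bar> * 1" by (intro mult_left_mono) auto
    moreover have "\<bar>4*bb*f*(1-f)\<bar> = \<bar>bb\<bar> * \<bar>4*f*(1-f)\<bar>" by (simp add: abs_mult[symmetric] algebra_simps)
    ultimately show ?thesis by simp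
  qed
  have qb: "\<bar>2*r*(y1*x2 - x1*y2)/E\<bar> \<le> r"
  proof -
    have "2*\<bar>y1*x2 - x1*y2\<bar> \<le> E"
      using E two_abs_mult_le[of y1 x2] two_abs_mult_le[of x1 y2] abs_triangle_ineq4[of "y1*x2" "x1*y2"] by argo
    then have "r * (2*\<bar>y1*x2 - x1*y2\<bar>) \<le> r * E" using r by (intro mult_left_mono) auto
    then show ?thesis using E r by (simp add: abs_mult divide_le_eq abs_divide)
  qed
  have "\<bar>-4*(bb + I1)*f\<bar> \<le> 4*h"
  proof -
    have "\<bar>bb + I1\<bar> * f \<le> h * 1" using hb f01 by (intro mult_mono) auto
    moreover have "\<bar>-4*(bb + I1)*f\<bar> = 4 * (\<bar>bb + I1\<bar> * f)" unfolding abs_mult using f01 by simp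
    ultimately show ?thesis by simp
  qed
  moreover have "\<bar>4*I2*(-4*bb*f*(1-f) + 2*r*(y1*x2 - x1*y2)/E)\<bar> \<le> 4*\<bar>I2\<bar>*(\<bar>bb\<bar> + r)"
  proof -
    have "\<bar>-4*bb*f*(1-f) + 2*r*(y1*x2 - x1*y2)/E\<bar> \<le> \<bar>bb\<bar> + r"
    proof -
      have "\<bar>-4*bb*f*(1-f)\<bar> = \<bar>4*bb*f*(1-f)\<bar>" by (simp add: abs_mult)
      then show ?thesis
        using ff qb abs_triangle_ineq[of "-4*bb*f*(1-f)" "2*r*(y1*x2 - x1*y2)/E"] by linarith
    qed
    then have "\<bar>I2\<bar> * \<bar>-4*bb*f*(1-f) + 2*r*(y1*x2 - x1*y2)/E\<bar> \<le> \<bar>I2\<bar> * (\<bar>bb\<bar> + r)"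
      by (intro mult_left_mono) auto
    then show ?thesis by (simp add: abs_mult)
  qed
  moreover have "4*\<bar>I2\<bar>*(\<bar>bb\<bar> + r) \<le> 4*h + 4*\<bar>I1\<bar>*\<bar>I2\<bar> + 4*r*\<bar>I2\<bar>"
  proof -
    have "\<bar>bb\<bar> \<le> h + \<bar>I1\<bar>" using hb by linarith
    then have "\<bar>I2\<bar> * \<bar>bb\<bar> \<le> 1 * h + \<bar>I2\<bar> * \<bar>I1\<bar>"
    proof -
      have "\<bar>I2\<bar> * \<bar>bb\<bar> \<le> \<bar>I2\<bar> * (h + \<bar>I1\<bar>)" using \<open>\<bar>bb\<bar> \<le> h + \<bar>I1\<bar>\<close> by (intro mult_left_mono) auto
      moreover have "\<bar>I2\<bar> * h \<le> 1 * h" using I2 hb by (intro mult_right_mono) auto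
      ultimately show ?thesis by (simp add: distrib_left)
    qed
    then show ?thesis by (simp add: algebra_simps)
  qed
  ultimately show ?thesis unfolding f_def[symmetric] by linarith
qed

lemma core_deriv:
  fixes pa qa pb qb bb I1f I2f :: "real \<Rightarrow> real"
  assumes dx1: "(pa has_real_derivative (-2*bb u*pa u - r*qb u)) (at u within S)"
    and dy1: "(qa has_real_derivative (-2*bb u*qa u + r*pb u)) (at u within S)"
    and dx2: "(pb has_real_derivative (- r*qa u)) (at u within S)"
    and dy2: "(qb has_real_derivative (r*pa u)) (at u within S)"
    and dI2: "(I2f has_real_derivative - I1f u) (at u within S)"
    and Epos: "0 < pa u^2 + qa u^2 + pb u^2 + qb u^2"
  defines "E \<equiv> \<lambda>u. pa u^2 + qa u^2 + pb u^2 + qb u^2"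
    and "P \<equiv> \<lambda>u. pa u^2 + qa u^2"
  shows "((\<lambda>u. ln (E u) + 4 * I2f u * (P u / E u)) has_real_derivative
      (-4*(bb u + I1f u)*(P u/E u) + 4*I2f u*(-4*bb u*(P u/E u)*(1 - P u/E u) + 2*r*(qa u*pb u - pa u*qb u)/E u)))
     (at u within S)"
proof -
  have dE: "(E has_real_derivative (-4*bb u*P u)) (at u within S)"
    unfolding E_def P_def
    by (rule derivative_eq_intros dx1 dy1 dx2 dy2 refl)+ (simp add: algebra_simps power2_eq_square)
  have dP: "(P has_real_derivative (-4*bb u*P u + 2*r*(qa u*pb u - pa u*qb u))) (at u within S)"
    unfolding P_def
    by (rule derivative_eq_intros dx1 dy1 refl)+ (simp add: algebra_simps power2_eq_square)
  have Ep: "0 < E u" using Epos unfolding E_def by simp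
  have dln: "((\<lambda>u. ln (E u)) has_real_derivative (-4*bb u*P u) / E u) (at u within S)"
    using DERIV_chain2[OF DERIV_ln_divide[OF Ep] dE] by simp
  have dF: "((\<lambda>u. P u / E u) has_real_derivative
      ((-4*bb u*P u + 2*r*(qa u*pb u - pa u*qb u)) * E u - P u * (-4*bb u*P u)) / (E u * E u)) (at u within S)"
    using DERIV_divide[OF dP dE] Ep by simp
  have fd: "((-4*bb u*P u + 2*r*(qa u*pb u - pa u*qb u)) * E u - P u * (-4*bb u*P u)) / (E u * E u)
      = -4*bb u*(P u/E u)*(1 - P u/E u) + 2*r*(qa u*pb u - pa u*qb u)/E u"
    using Ep by (simp add: field_simps)
  have dG: "((\<lambda>u. ln (E u) + 4 * (I2f u * (P u / E u))) has_real_derivative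
      (-4*bb u*P u) / E u + 4 * (- I1f u * (P u / E u) + I2f u * (-4*bb u*(P u/E u)*(1 - P u/E u) + 2*r*(qa u*pb u - pa u*qb u)/E u))) (at u within S)"
  proof -
    have m: "((\<lambda>u. I2f u * (P u / E u)) has_real_derivative
      - I1f u * (P u / E u) + I2f u * (-4*bb u*(P u/E u)*(1 - P u/E u) + 2*r*(qa u*pb u - pa u*qb u)/E u)) (at u within S)"
      by (rule DERIV_cong[OF DERIV_mult[OF dI2 dF[unfolded fd]]]) (simp add: algebra_simps)
    show ?thesis by (intro DERIV_add DERIV_cmult m dln)
  qed
  have eq: "(-4*bb u*P u) / E u + 4 * (- I1f u * (P u / E u) + I2f u * (-4*bb u*(P u/E u)*(1 - P u/E u) + 2*r*(qa u*pb u - pa u*qb u)/E u))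
     = -4*(bb u + I1f u)*(P u/E u) + 4*I2f u*(-4*bb u*(P u/E u)*(1 - P u/E u) + 2*r*(qa u*pb u - pa u*qb u)/E u)"
    by (simp add: algebra_simps)
  show ?thesis using dG unfolding eq by (simp add: mult.assoc)
qed

lemma core:
  fixes x1 y1 x2 y2 bb I1f I2f h :: "real \<Rightarrow> real"
  assumes ac: "a \<le> c" and r: "0 \<le> r"
    and dx1: "\<And>u. u \<in> {a..c} \<Longrightarrow> (x1 has_real_derivative (-2*bb u*x1 u - r*y2 u)) (at u within {a..c})"
    and dy1: "\<And>u. u \<in> {a..c} \<Longrightarrow> (y1 has_real_derivative (-2*bb u*y1 u + r*x2 u)) (at u within {a..c})"
    and dx2: "\<And>u. u \<in> {a..c} \<Longrightarrow> (x2 has_real_derivative (- r*y1 u)) (at u within {a..c})"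
    and dy2: "\<And>u. u \<in> {a..c} \<Longrightarrow> (y2 has_real_derivative (r*x1 u)) (at u within {a..c})"
    and dI2: "\<And>u. u \<in> {a..c} \<Longrightarrow> (I2f has_real_derivative - I1f u) (at u within {a..c})"
    and I2b: "\<And>u. u \<in> {a..c} \<Longrightarrow> \<bar>I2f u\<bar> \<le> 1"
    and hb: "\<And>u. u \<in> {a..c} \<Longrightarrow> \<bar>bb u + I1f u\<bar> \<le> h u"
    and ch: "continuous_on {a..c} h" and c1: "continuous_on {a..c} I1f" and c2: "continuous_on {a..c} I2f"
    and Epos: "\<And>u. u \<in> {a..c} \<Longrightarrow> 0 < x1 u^2 + y1 u^2 + x2 u^2 + y2 u^2"
  shows "\<bar>ln (x1 c^2 + y1 c^2 + x2 c^2 + y2 c^2) - ln (x1 a^2 + y1 a^2 + x2 a^2 + y2 a^2)\<bar>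
           \<le> 8 + integral {a..c} (\<lambda>u. 8*h u + 4*\<bar>I1f u\<bar>*\<bar>I2f u\<bar> + 4*r*\<bar>I2f u\<bar>)"
proof -
  define E where "E \<equiv> \<lambda>u. x1 u^2 + y1 u^2 + x2 u^2 + y2 u^2"
  define P where "P \<equiv> \<lambda>u. x1 u^2 + y1 u^2"
  define G where "G \<equiv> \<lambda>u. ln (E u) + 4 * I2f u * (P u / E u)"
  define D where "D \<equiv> \<lambda>u. (-4*(bb u + I1f u)*(P u/E u) + 4*I2f u*(-4*bb u*(P u/E u)*(1 - P u/E u) + 2*r*(y1 u*x2 u - x1 u*y2 u)/E u))"
  define g where "g \<equiv> \<lambda>u. 8*h u + 4*\<bar>I1f u\<bar>*\<bar>I2f u\<bar> + 4*r*\<bar>I2f u\<bar>"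
  have dG: "(G has_vector_derivative D u) (at u within {a..c})" if "u \<in> {a..c}" for u
    using core_deriv[where pa=x1 and qa=y1 and pb=x2 and qb=y2 and bb=bb and r=r and u=u and I2f=I2f and I1f=I1f and S="{a..c}", OF dx1[OF that] dy1[OF that] dx2[OF that] dy2[OF that] dI2[OF that] Epos[OF that]]
    unfolding G_def D_def E_def P_def has_real_derivative_iff_has_vector_derivative .
  have int: "(D has_integral (G c - G a)) {a..c}"
    by (rule fundamental_theorem_of_calculus[OF ac dG]) auto
  have gint: "g integrable_on {a..c}"
    unfolding g_def by (intro integrable_continuous_real continuous_intros ch c1 c2)
  have Dg: "norm (D u) \<le> g u" if "u \<in> {a..c}" for u
    unfolding D_def g_def real_norm_def E_def P_def
    by (rule core_pointwise[OF refl Epos[OF that] refl r I2b[OF that] hb[OF that]])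
  have "\<bar>G c - G a\<bar> \<le> integral {a..c} g"
    using integral_norm_bound_integral[OF has_integral_integrable[OF int] gint Dg] int
    by (simp add: integral_unique)
  moreover have b4: "\<bar>4 * I2f u * (P u / E u)\<bar> \<le> 4" if "u \<in> {a..c}" for u
  proof -
    have "0 \<le> P u / E u" "P u / E u \<le> 1" using Epos[OF that] unfolding P_def E_def by (auto simp: field_simps)
    then have "\<bar>I2f u\<bar> * \<bar>P u / E u\<bar> \<le> 1 * 1" using I2b[OF that] by (intro mult_mono) auto
    then show ?thesis by (simp add: abs_mult)
  qed
  ultimately have GG: "\<bar>G c - G a\<bar> \<le> integral {a..c} g" by blast
  have A: "\<bar>4 * I2f a * (P a / E a)\<bar> \<le> 4" "\<bar>4 * I2f c * (P c / E c)\<bar> \<le> 4" using b4 ac by auto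
  have "\<bar>ln (E c) - ln (E a)\<bar> \<le> 8 + integral {a..c} g"
    using GG A unfolding G_def abs_le_iff by linarith
  then show ?thesis unfolding E_def g_def .
qed

lemma gronwall_zero:
  fixes E E' :: "real \<Rightarrow> real"
  assumes ac: "a \<le> c" and K: "0 \<le> K"
    and dE: "\<And>u. u \<in> {a..c} \<Longrightarrow> (E has_real_derivative E' u) (at u within {a..c})"
    and bd: "\<And>u. u \<in> {a..c} \<Longrightarrow> \<bar>E' u\<bar> \<le> K * E u"
    and nn: "\<And>u. u \<in> {a..c} \<Longrightarrow> 0 \<le> E u"
    and u0: "u0 \<in> {a..c}" "E u0 = 0"
    and u: "u \<in> {a..c}"
  shows "E u = 0"
proof (cases "u0 \<le> u")
  case True
  define F where "F v = exp (- K * v) * E v" for v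
  have "\<And>x. u0 \<le> x \<Longrightarrow> x \<le> u \<Longrightarrow> (F has_derivative (*) (exp (- K * x) * (E' x - K * E x))) (at x within {u0..u})"
  proof -
    fix x assume x: "u0 \<le> x" "x \<le> u"
    have xin: "x \<in> {a..c}" using x u0 u by auto
    have "(F has_real_derivative (exp (- K * x) * (E' x - K * E x))) (at x within {a..c})"
      unfolding F_def by (rule derivative_eq_intros dE[OF xin] refl)+ (simp add: algebra_simps)
    then have "(F has_real_derivative (exp (- K * x) * (E' x - K * E x))) (at x within {u0..u})"
      by (rule DERIV_subset) (use u0 u in auto)
    then show "(F has_derivative (*) (exp (- K * x) * (E' x - K * E x))) (at x within {u0..u})"
      unfolding has_field_derivative_def .
  qed
  from mvt_very_simple[OF True this] obtain x where x: "x \<in> {u0..u}"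
    "F u - F u0 = (exp (- K * x) * (E' x - K * E x)) * (u - u0)" by auto
  have "E' x - K * E x \<le> 0" using bd[of x] x u0 u by auto
  then have "(exp (- K * x) * (E' x - K * E x)) * (u - u0) \<le> 0"
    using True by (intro mult_nonpos_nonneg mult_nonneg_nonpos) auto
  then have "F u \<le> 0" using x u0 unfolding F_def by simp
  then have "E u \<le> 0" unfolding F_def by (simp add: mult_le_0_iff)
  then show ?thesis using nn[OF u] by simp
next
  case False
  then have le: "u \<le> u0" by simp
  define F where "F v = exp (K * v) * E v" for v
  have "\<And>x. u \<le> x \<Longrightarrow> x \<le> u0 \<Longrightarrow> (F has_derivative (*) (exp (K * x) * (E' x + K * E x))) (at x within {u..u0})"
  proof -
    fix x assume x: "u \<le> x" "x \<le> u0"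
    have xin: "x \<in> {a..c}" using x u0 u by auto
    have "(F has_real_derivative (exp (K * x) * (E' x + K * E x))) (at x within {a..c})"
      unfolding F_def by (rule derivative_eq_intros dE[OF xin] refl)+ (simp add: algebra_simps)
    then have "(F has_real_derivative (exp (K * x) * (E' x + K * E x))) (at x within {u..u0})"
      by (rule DERIV_subset) (use u0 u in auto)
    then show "(F has_derivative (*) (exp (K * x) * (E' x + K * E x))) (at x within {u..u0})"
      unfolding has_field_derivative_def .
  qed
  from mvt_very_simple[OF le this] obtain x where x: "x \<in> {u..u0}"
    "F u0 - F u = (exp (K * x) * (E' x + K * E x)) * (u0 - u)" by auto
  have "0 \<le> E' x + K * E x" using bd[of x] x u0 u by auto
  then have "0 \<le> (exp (K * x) * (E' x + K * E x)) * (u0 - u)"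
    using le by (intro mult_nonneg_nonneg) auto
  then have "F u \<le> 0" using x u0 unfolding F_def by simp
  then have "E u \<le> 0" unfolding F_def by (simp add: mult_le_0_iff)
  then show ?thesis using nn[OF u] by simp
qed

lemma E_deriv:
  fixes pa qa pb qb bb :: "real \<Rightarrow> real"
  assumes dx1: "(pa has_real_derivative (-2*bb u*pa u - r*qb u)) (at u within S)"
    and dy1: "(qa has_real_derivative (-2*bb u*qa u + r*pb u)) (at u within S)"
    and dx2: "(pb has_real_derivative (- r*qa u)) (at u within S)"
    and dy2: "(qb has_real_derivative (r*pa u)) (at u within S)"
  shows "((\<lambda>u. pa u^2 + qa u^2 + pb u^2 + qb u^2) has_real_derivative (-4*bb u*(pa u^2 + qa u^2))) (at u within S)"
  by (rule derivative_eq_intros dx1 dy1 dx2 dy2 refl)+ (simp add: algebra_simps power2_eq_square)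


lemma comp_deriv:
  assumes "(W has_vector_derivative V) F" "bounded_linear L"
  shows "((\<lambda>t. L (W t)) has_real_derivative L V) F"
proof -
  have "((\<lambda>t. L (W t)) has_derivative (\<lambda>x. L (x *\<^sub>R V))) F"
    using bounded_linear.has_derivative[OF assms(2) assms(1)[unfolded has_vector_derivative_def]] .
  moreover have "(\<lambda>x. L (x *\<^sub>R V)) = (*) (L V)"
    by (rule ext) (simp add: linear.scaleR[OF bounded_linear.linear[OF assms(2)]])
  ultimately show ?thesis unfolding has_field_derivative_def by simp
qed

lemma bl1: "bounded_linear (\<lambda>v::complex^2. Re (v $ i))"
  by (rule bounded_linear_compose[OF bounded_linear_Re bounded_linear_vec_nth])
lemma bl2: "bounded_linear (\<lambda>v::complex^2. Im (v $ i))"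
  by (rule bounded_linear_compose[OF bounded_linear_Im bounded_linear_vec_nth])

lemma sysmat_1: "(sysmat b r t *v w) $ 1 = - 2 * complex_of_real (b t) * w $ 1 + \<i> * complex_of_real r * w $ 2"
  by (simp add: sysmat_def matrix_vector_mult_def sum_2)
lemma sysmat_2: "(sysmat b r t *v w) $ 2 = \<i> * complex_of_real r * w $ 1"
  by (simp add: sysmat_def matrix_vector_mult_def sum_2)

lemma norm_c2: "norm (w::complex^2) = sqrt (Re (w$1)^2 + Im (w$1)^2 + Re (w$2)^2 + Im (w$2)^2)"
  by (simp add: norm_vec_def L2_set_def sum_2 cmod_power2 add.assoc)

lemma ode_components:
  assumes "(W has_vector_derivative (sysmat b r t *v W t)) F"
  shows "((\<lambda>t. Re (W t $ 1)) has_real_derivative (-2 * b t * Re (W t $ 1) - r * Im (W t $ 2))) F"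
    "((\<lambda>t. Im (W t $ 1)) has_real_derivative (-2 * b t * Im (W t $ 1) + r * Re (W t $ 2))) F"
    "((\<lambda>t. Re (W t $ 2)) has_real_derivative (- r * Im (W t $ 1))) F"
    "((\<lambda>t. Im (W t $ 2)) has_real_derivative (r * Re (W t $ 1))) F"
  by (rule DERIV_cong[OF comp_deriv[OF assms bl1[of 1]]], simp add: sysmat_1 sysmat_2)
     (rule DERIV_cong[OF comp_deriv[OF assms bl2[of 1]]], simp add: sysmat_1 sysmat_2,
      rule DERIV_cong[OF comp_deriv[OF assms bl1[of 2]]], simp add: sysmat_1 sysmat_2,
      rule DERIV_cong[OF comp_deriv[OF assms bl2[of 2]]], simp add: sysmat_1 sysmat_2)


lemma reidx: "(\<Sum>j\<in>{2..Suc m}. g (j - 2) (Suc m - j)) = (\<Sum>i<m. g i (m - 1 - i))"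
  by (rule sum.reindex_bij_witness[where i="\<lambda>i. i+2" and j="\<lambda>j. j-2"]) (auto simp: Suc_diff_le)

lemma amgm_eps: "0 < e \<Longrightarrow> 2 * \<bar>x\<bar> * y \<le> e * x^2 + y^2 / e" for x y e :: real
proof -
  assume e: "0 < e"
  have "0 \<le> (e * \<bar>x\<bar> - y)^2 / e" using e by simp
  also have "(e * \<bar>x\<bar> - y)^2 / e = e * x^2 - 2 * \<bar>x\<bar> * y + y^2 / e"
    using e by (simp add: power2_eq_square field_simps)
  finally show ?thesis by simp
qed

lemma abs3: "\<bar>a + b + c\<bar> \<le> \<bar>a\<bar> + \<bar>b\<bar> + \<bar>c::real\<bar>"
  using abs_triangle_ineq[of "a+b" c] abs_triangle_ineq[of a b] by linarith

locale setting =
  fixes M :: "real \<Rightarrow> real" and \<alpha> \<beta> \<gamma> T :: real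
  assumes SA: "standing_assumptions M \<alpha> \<beta> \<gamma>" and AT: "admissible_T M T"
begin

abbreviation "I1 \<equiv> tail M"
abbreviation "I2 \<equiv> tail I1"
abbreviation "Sq \<equiv> (\<lambda>s. (I1 s)^2)"
abbreviation "J \<equiv> tail Sq"

lemma Tpos: "0 < T" using AT unfolding admissible_T_def by auto

lemma SAu: "continuous_on {0..} M \<and>
     \<alpha> \<le> 1 \<and> \<beta> < 1 \<and> \<gamma> > 0 \<and>
     (\<alpha> \<noteq> 0 \<longrightarrow> \<gamma> \<ge> \<beta> \<and> \<beta> \<ge> (\<alpha> + 1) / 2) \<and>
     (\<alpha> = 0 \<longrightarrow> \<gamma> \<ge> \<beta> \<and> \<beta> > 1 / 2) \<and>
     (\<forall>t\<ge>0. has_tail M t \<and> has_tail I1 t) \<and>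
     (\<alpha> \<ge> 0 \<longrightarrow> (\<exists>C. \<forall>t\<ge>0. integral {0..t} (\<lambda>s. \<bar>I2 s\<bar>) \<le> C * (1 + t) powr \<alpha>)) \<and>
     (\<alpha> \<le> 0 \<longrightarrow> (\<exists>C. \<forall>t\<ge>0. has_tail (\<lambda>s. \<bar>I2 s\<bar>) t \<and>
                             tail (\<lambda>s. \<bar>I2 s\<bar>) t \<le> C * (1 + t) powr \<alpha>)) \<and>
     (\<exists>C. \<forall>t\<ge>0. \<bar>M t\<bar> \<le> C * (1 + t) powr (- 2 * \<beta>)) \<and>
     (\<exists>C. \<forall>t\<ge>0. \<bar>I1 t\<bar> \<le> C * (1 + t) powr (- \<gamma>)) \<and>
     (\<exists>C. \<forall>t\<ge>0. has_tail Sq t \<and> J t \<le> C * (1 + t) powr (- \<gamma>)) \<and>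
     has_tail J 0 \<and>
     (\<exists>C. \<forall>t\<ge>0. has_tail J t \<and> (1 + t) powr \<alpha> * tail J t \<le> C)"
  using SA unfolding standing_assumptions_def Let_def .

lemmas SAp = SAu[THEN conjunct1] SAu[THEN conjunct2, THEN conjunct1]
  SAu[THEN conjunct2, THEN conjunct2, THEN conjunct1]
  SAu[THEN conjunct2, THEN conjunct2, THEN conjunct2, THEN conjunct1]
  SAu[THEN conjunct2, THEN conjunct2, THEN conjunct2, THEN conjunct2, THEN conjunct1]
  SAu[THEN conjunct2, THEN conjunct2, THEN conjunct2, THEN conjunct2, THEN conjunct2, THEN conjunct1]
  SAu[THEN conjunct2, THEN conjunct2, THEN conjunct2, THEN conjunct2, THEN conjunct2, THEN conjunct2, THEN conjunct1]
  SAu[THEN conjunct2, THEN conjunct2, THEN conjunct2, THEN conjunct2, THEN conjunct2, THEN conjunct2, THEN conjunct2, THEN conjunct1]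
  SAu[THEN conjunct2, THEN conjunct2, THEN conjunct2, THEN conjunct2, THEN conjunct2, THEN conjunct2, THEN conjunct2, THEN conjunct2, THEN conjunct1]
  SAu[THEN conjunct2, THEN conjunct2, THEN conjunct2, THEN conjunct2, THEN conjunct2, THEN conjunct2, THEN conjunct2, THEN conjunct2, THEN conjunct2, THEN conjunct1]
  SAu[THEN conjunct2, THEN conjunct2, THEN conjunct2, THEN conjunct2, THEN conjunct2, THEN conjunct2, THEN conjunct2, THEN conjunct2, THEN conjunct2, THEN conjunct2, THEN conjunct1]
  SAu[THEN conjunct2, THEN conjunct2, THEN conjunct2, THEN conjunct2, THEN conjunct2, THEN conjunct2, THEN conjunct2, THEN conjunct2, THEN conjunct2, THEN conjunct2, THEN conjunct2, THEN conjunct1]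
  SAu[THEN conjunct2, THEN conjunct2, THEN conjunct2, THEN conjunct2, THEN conjunct2, THEN conjunct2, THEN conjunct2, THEN conjunct2, THEN conjunct2, THEN conjunct2, THEN conjunct2, THEN conjunct2, THEN conjunct1]
  SAu[THEN conjunct2, THEN conjunct2, THEN conjunct2, THEN conjunct2, THEN conjunct2, THEN conjunct2, THEN conjunct2, THEN conjunct2, THEN conjunct2, THEN conjunct2, THEN conjunct2, THEN conjunct2, THEN conjunct2]

lemma Mcont: "continuous_on {0..b} M"
  by (rule continuous_on_subset[OF SAp(1)]) auto

lemma hM: "t \<ge> 0 \<Longrightarrow> has_tail M t"
  using SAp(7) by blast
lemma hI1: "t \<ge> 0 \<Longrightarrow> has_tail I1 t"
  using SAp(7) by blast
lemma hSq: "t \<ge> 0 \<Longrightarrow> has_tail Sq t"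
  using SAp(12) by blast
lemma hJ: "t \<ge> 0 \<Longrightarrow> has_tail J t"
  using SAp(14) by blast

lemma I1cont: "continuous_on {0..b} I1"
  by (rule tail_cont[OF hM Mcont]) simp
lemma I2cont: "continuous_on {0..b} I2"
  by (rule tail_cont[OF hI1 I1cont]) simp
lemma Sqcont: "continuous_on {0..b} Sq"
  by (intro continuous_intros I1cont)
lemma Jcont: "continuous_on {0..b} J"
  by (rule tail_cont[OF hSq Sqcont]) simp

lemma J_nonneg: "t \<ge> 0 \<Longrightarrow> 0 \<le> J t"
  by (rule tail_nonneg[OF hSq]) auto
lemma J_mono: "0 \<le> t \<Longrightarrow> t \<le> s \<Longrightarrow> J s \<le> J t"
  by (rule tail_mono[OF hSq]) auto

lemma Q1: "Qk M (Suc 0) = (\<lambda>s. - I1 s)"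
  by (rule ext) simp

lemma Q2: "Qk M 2 = (\<lambda>s. - J s)"
proof -
  have e: "(\<lambda>s. \<Sum>j\<in>{1..Suc 0}. Qk M j s * Qk M (Suc (Suc 0) - j) s) = Sq"
    by (rule ext) (simp add: power2_eq_square)
  show ?thesis by (rule ext) (simp only: numeral_2_eq_2 Qk.simps e)
qed

lemma I2_le1: "t \<ge> T \<Longrightarrow> \<bar>I2 t\<bar> \<le> 1"
proof -
  assume t: "t \<ge> T"
  then have t0: "t \<ge> 0" using Tpos by simp
  have "tail (Qk M 1) t = tail (\<lambda>s. (-1) * I1 s + 0 * I1 s) t"
    using Q1 by (simp add: One_nat_def)
  also have "\<dots> = - I2 t" using tail_lin(2)[OF hI1[OF t0] hI1[OF t0], of "-1" 0] by simp
  finally show ?thesis using AT t unfolding admissible_T_def by auto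
qed


lemma phi_le: "t \<ge> T \<Longrightarrow> tail J t \<le> eps0^2"
proof -
  assume t: "t \<ge> T"
  then have t0: "t \<ge> 0" using Tpos by simp
  have "phi M t = - tail (\<lambda>s. (-1) * J s + 0 * J s) t"
    unfolding phi_def Q2 by simp
  also have "\<dots> = tail J t" using tail_lin(2)[OF hJ[OF t0] hJ[OF t0], of "-1" 0] by simp
  finally have "tail J t = phi M t" by simp
  also have "\<dots> \<le> 6 powr (-4)" using AT t unfolding admissible_T_def by auto
  also have "\<dots> = eps0^2" by (simp add: eps0_def powr_minus powr_realpow power2_eq_square)
  finally show ?thesis .
qed

lemma cont_T: "continuous_on {0..b} f \<Longrightarrow> T \<le> t \<Longrightarrow> continuous_on {t..b} f"
  using Tpos by (auto intro: continuous_on_subset)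

lemma hJ2: assumes t: "t \<ge> T"
  shows "has_tail (\<lambda>s. (J s)^2) t" "tail (\<lambda>s. (J s)^2) t \<le> eps0^2 * J t"
proof -
  have t0: "t \<ge> 0" using t Tpos by simp
  have hg: "has_tail (\<lambda>s. J t * J s + 0 * J s) t" "tail (\<lambda>s. J t * J s + 0 * J s) t = J t * tail J t"
    using tail_lin[OF hJ[OF t0] hJ[OF t0], of "J t" 0] by auto
  have le: "\<bar>(J s)^2\<bar> \<le> J t * J s + 0 * J s" if "s \<ge> t" for s
    using J_mono[OF t0 that] J_nonneg[of s] t0 that by (simp add: power2_eq_square mult_right_mono)
  have int: "(\<lambda>s. (J s)^2) integrable_on {t..R}" for R
    by (intro integrable_continuous_real continuous_intros cont_T[OF Jcont t])
  show h: "has_tail (\<lambda>s. (J s)^2) t"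
    by (rule has_tail_comparison[OF int le hg(1)])
  have "tail (\<lambda>s. (J s)^2) t \<le> J t * tail J t"
    using tail_le[OF h hg(1)] le hg(2) by (simp add: abs_le_iff)
  also have "\<dots> \<le> J t * eps0^2" using phi_le[OF t] J_nonneg[OF t0] by (intro mult_left_mono)
  finally show "tail (\<lambda>s. (J s)^2) t \<le> eps0^2 * J t" by (simp add: mult.commute)
qed

lemma tail_majorant:
  assumes t: "t \<ge> T" and c: "0 \<le> c1" "0 \<le> c2"
    and cont: "\<And>b. continuous_on {T..b} q"
    and bd: "\<And>s. s \<ge> T \<Longrightarrow> \<bar>q s\<bar> \<le> c1 * Sq s + c2 * (J s)^2"
  shows "has_tail q t" "\<bar>tail q t\<bar> \<le> (c1 + c2 * eps0^2) * J t"
proof -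
  have t0: "t \<ge> 0" using t Tpos by simp
  have hg: "has_tail (\<lambda>s. c1 * Sq s + c2 * (J s)^2) t"
    "tail (\<lambda>s. c1 * Sq s + c2 * (J s)^2) t = c1 * J t + c2 * tail (\<lambda>s. (J s)^2) t"
    using tail_lin[OF hSq[OF t0] hJ2(1)[OF t], of c1 c2] by auto
  have int: "q integrable_on {t..R}" for R
    using cont[of R] t by (intro integrable_continuous_real) (auto intro: continuous_on_subset)
  show h: "has_tail q t"
    by (rule has_tail_comparison[OF int _ hg(1)]) (use bd t in auto)
  have "\<bar>tail q t\<bar> \<le> c1 * J t + c2 * tail (\<lambda>s. (J s)^2) t"
    using tail_abs_le[OF h hg(1)] bd t hg(2) by auto
  also have "\<dots> \<le> c1 * J t + c2 * (eps0^2 * J t)"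
    using hJ2(2)[OF t] c by (intro add_left_mono mult_left_mono) auto
  finally show "\<bar>tail q t\<bar> \<le> (c1 + c2 * eps0^2) * J t" by (simp add: algebra_simps)
qed

declare Qk.simps(3)[simp del]

lemma Qk_props: "(\<forall>b. continuous_on {T..b} (Qk M k)) \<and> (2 \<le> k \<longrightarrow> (\<forall>s\<ge>T. \<bar>Qk M k s\<bar> \<le> cseq (k-2) * J s))"
proof (induction k rule: less_induct)
  case (less k)
  have "k = 0 \<or> k = 1 \<or> k = 2 \<or> (\<exists>m. k = Suc (Suc (Suc m)))" by presburger
  then consider "k = 0" | "k = 1" | "k = 2" | m where "k = Suc (Suc (Suc m))" by blast
  then show ?case
  proof cases
    case 1
    have "Qk M 0 = (\<lambda>t. 0)" by (rule ext) simp
    then show ?thesis using 1 by simp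
  next
    case 2
    then show ?thesis using Q1 cont_T[OF I1cont order_refl]
      by (simp add: One_nat_def continuous_on_minus)
  next
    case 3
    have "\<bar>Qk M k s\<bar> \<le> cseq (k-2) * J s" if "s \<ge> T" for s
      using 3 Q2 J_nonneg[of s] that Tpos by simp
    then show ?thesis using 3 Q2 cont_T[OF Jcont order_refl]
      by (simp add: continuous_on_minus)
  next
    case 4
    define q where "q s = (\<Sum>j\<in>{1..Suc (Suc m)}. Qk M j s * Qk M (Suc (Suc (Suc m)) - j) s)" for s
    have Qeq: "Qk M k = (\<lambda>t. - tail q t)"
      unfolding 4 q_def[abs_def] by (rule ext) (simp only: Qk.simps(3))
    have IHc: "continuous_on {T..b} (Qk M j)" if "j < k" for j b
      using less.IH[OF that] by blast
    have IHb: "\<bar>Qk M j s\<bar> \<le> cseq (j-2) * J s" if "j < k" "2 \<le> j" "s \<ge> T" for j s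
      using less.IH[OF that(1)] that by blast
    have contq: "continuous_on {T..b} q" for b
      unfolding q_def[abs_def] using 4
      by (intro continuous_on_sum continuous_on_mult IHc) auto
    define S where "S = (\<Sum>i<m. cseq i * cseq (m - 1 - i))"
    have S0: "0 \<le> S" unfolding S_def by (intro sum_nonneg mult_nonneg_nonneg cseq_nonneg)
    have e0: "0 < eps0" by (simp add: eps0_def)
    have bd: "\<bar>q s\<bar> \<le> (cseq m * eps0) * Sq s + (cseq m / eps0 + S) * (J s)^2" if s: "s \<ge> T" for s
    proof -
      have s0: "s \<ge> 0" using s Tpos by simp
      have split: "{1..Suc (Suc m)} = insert 1 (insert (Suc (Suc m)) {2..Suc m})" by auto
      have qs: "q s = Qk M 1 s * Qk M (Suc (Suc m)) s + Qk M (Suc (Suc m)) s * Qk M 1 s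
          + (\<Sum>j\<in>{2..Suc m}. Qk M j s * Qk M (Suc (Suc (Suc m)) - j) s)"
        unfolding q_def split by (simp add: numeral_2_eq_2)
      have b1: "\<bar>Qk M 1 s\<bar> = \<bar>I1 s\<bar>" using Q1 by (simp add: One_nat_def)
      have bm: "\<bar>Qk M (Suc (Suc m)) s\<bar> \<le> cseq m * J s"
        using IHb[of "Suc (Suc m)" s] 4 s by simp
      have bmid: "\<bar>\<Sum>j\<in>{2..Suc m}. Qk M j s * Qk M (Suc (Suc (Suc m)) - j) s\<bar>
          \<le> (\<Sum>j\<in>{2..Suc m}. cseq (j - 2) * cseq (Suc m - j)) * (J s)^2"
      proof -
        have "\<bar>\<Sum>j\<in>{2..Suc m}. Qk M j s * Qk M (Suc (Suc (Suc m)) - j) s\<bar>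
            \<le> (\<Sum>j\<in>{2..Suc m}. \<bar>Qk M j s * Qk M (Suc (Suc (Suc m)) - j) s\<bar>)"
          by (rule sum_abs)
        also have "\<dots> \<le> (\<Sum>j\<in>{2..Suc m}. cseq (j - 2) * cseq (Suc m - j) * (J s)^2)"
        proof (rule sum_mono)
          fix j assume j: "j \<in> {2..Suc m}"
          have "\<bar>Qk M j s\<bar> \<le> cseq (j-2) * J s" using IHb[of j s] j 4 s by auto
          moreover have "\<bar>Qk M (Suc (Suc (Suc m)) - j) s\<bar> \<le> cseq (Suc m - j) * J s"
            using IHb[of "Suc (Suc (Suc m)) - j" s] j 4 s by (auto simp: Suc_diff_le)
          ultimately have "\<bar>Qk M j s\<bar> * \<bar>Qk M (Suc (Suc (Suc m)) - j) s\<bar> \<le> (cseq (j-2) * J s) * (cseq (Suc m - j) * J s)"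
            by (intro mult_mono) auto
          then show "\<bar>Qk M j s * Qk M (Suc (Suc (Suc m)) - j) s\<bar> \<le> cseq (j - 2) * cseq (Suc m - j) * (J s)^2"
            by (simp add: abs_mult power2_eq_square algebra_simps)
        qed
        also have "\<dots> = (\<Sum>j\<in>{2..Suc m}. cseq (j - 2) * cseq (Suc m - j)) * (J s)^2"
          by (rule sum_distrib_right[symmetric])
        finally show ?thesis .
      qed
      have "(\<Sum>j\<in>{2..Suc m}. cseq (j - 2) * cseq (Suc m - j)) = S"
        unfolding S_def by (rule reidx)
      note bmid = bmid[unfolded this]
      have "\<bar>q s\<bar> \<le> 2 * \<bar>I1 s\<bar> * (cseq m * J s) + S * (J s)^2"
      proof -
        have "\<bar>Qk M 1 s * Qk M (Suc (Suc m)) s\<bar> \<le> \<bar>I1 s\<bar> * (cseq m * J s)"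
          unfolding abs_mult b1 by (rule mult_left_mono[OF bm]) simp
        moreover have "\<bar>Qk M (Suc (Suc m)) s * Qk M 1 s\<bar> \<le> \<bar>I1 s\<bar> * (cseq m * J s)"
          unfolding abs_mult b1 using mult_left_mono[OF bm abs_ge_zero[of "I1 s"]] by (simp add: mult_ac)
        moreover have "\<bar>q s\<bar> \<le> \<bar>Qk M 1 s * Qk M (Suc (Suc m)) s\<bar> + \<bar>Qk M (Suc (Suc m)) s * Qk M 1 s\<bar>
            + \<bar>\<Sum>j\<in>{2..Suc m}. Qk M j s * Qk M (Suc (Suc (Suc m)) - j) s\<bar>"
          unfolding qs by (rule abs3)
        ultimately show ?thesis using bmid by linarith
      qed
      also have "2 * \<bar>I1 s\<bar> * (cseq m * J s) + S * (J s)^2 \<le> cseq m * (eps0 * (I1 s)^2 + (J s)^2 / eps0) + S * (J s)^2"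
        using mult_left_mono[OF amgm_eps[OF e0, of "I1 s" "J s"] cseq_nonneg[of m]] by (simp add: mult_ac)
      also have "cseq m * (eps0 * (I1 s)^2 + (J s)^2 / eps0) + S * (J s)^2
          = (cseq m * eps0) * Sq s + (cseq m / eps0 + S) * (J s)^2"
        by (simp add: algebra_simps)
      finally show ?thesis .
    qed
    have c1: "0 \<le> cseq m * eps0" using cseq_nonneg e0 by simp
    have c2: "0 \<le> cseq m / eps0 + S" using cseq_nonneg e0 S0 by simp
    have ht: "has_tail q t" if "t \<ge> T" for t
      using tail_majorant(1)[OF that c1 c2 contq bd] .
    have cont: "continuous_on {T..b} (Qk M k)" for b
      unfolding Qeq using tail_cont[OF ht[OF order_refl] contq[of b]] by (intro continuous_on_minus)
    have "\<bar>Qk M k s\<bar> \<le> cseq (k-2) * J s" if s: "s \<ge> T" for s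
    proof -
      have "\<bar>Qk M k s\<bar> = \<bar>tail q s\<bar>" unfolding Qeq by simp
      also have "\<dots> \<le> (cseq m * eps0 + (cseq m / eps0 + S) * eps0^2) * J s"
        using tail_majorant(2)[OF s c1 c2 contq bd] .
      also have "cseq m * eps0 + (cseq m / eps0 + S) * eps0^2 = cseq (k-2)"
      proof -
        have "cseq (k-2) = 2 * eps0 * cseq m + eps0^2 * S" unfolding 4 S_def by simp
        then show ?thesis using e0 by (simp add: power2_eq_square field_simps)
      qed
      finally show ?thesis .
    qed
    then show ?thesis using cont by blast
  qed
qed

end


context setting
begin

lemma Qb: "s \<ge> T \<Longrightarrow> \<bar>Qk M (Suc (Suc n)) s\<bar> \<le> cseq n * J s"
  using Qk_props[of "Suc (Suc n)"] by simp

lemma b_bound: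
  assumes s: "s \<ge> T"
  shows "\<bar>bcoef M s + I1 s\<bar> \<le> 2 * J s"
proof -
  define f where "f k = Qk M (Suc k) s" for k
  have s0: "s \<ge> 0" using s Tpos by simp
  have g: "norm (f (Suc n)) \<le> cseq n * J s" for n
    unfolding f_def using Qb[OF s, of n] by simp
  have sm: "summable (\<lambda>n. cseq n * J s)" by (intro summable_mult2 cseq_summable)
  have s1: "summable (\<lambda>n. f (Suc n))" by (rule summable_comparison_test'[OF sm g])
  then have sf: "summable f" by (simp add: summable_Suc_iff)
  have "bcoef M s = suminf f" unfolding bcoef_def f_def ..
  moreover have "f 0 = - I1 s" unfolding f_def by simp
  ultimately have eq: "bcoef M s + I1 s = (\<Sum>n. f (Suc n))"
    using suminf_split_head[OF sf] by simp
  have le1: "(\<Sum>n. f (Suc n)) \<le> (\<Sum>n. cseq n * J s)"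
    using g s1 sm by (intro suminf_le) (auto simp: abs_le_iff)
  have le2: "(\<Sum>n. - f (Suc n)) \<le> (\<Sum>n. cseq n * J s)"
    using g s1 sm by (intro suminf_le) (auto simp: abs_le_iff summable_minus)
  have "(\<Sum>n. cseq n * J s) = suminf cseq * J s" using suminf_mult2[OF cseq_summable] by simp
  also have "\<dots> \<le> 2 * J s" using cseq_suminf J_nonneg[OF s0] by (intro mult_right_mono) auto
  finally show ?thesis using eq le1 le2 suminf_minus[OF s1] by (simp add: abs_le_iff)
qed

lemma dI2:
  assumes "T \<le> a" "u \<in> {a..c}"
  shows "(I2 has_real_derivative - I1 u) (at u within {a..c})"
proof -
  have "u \<in> {0..c}" using assms Tpos by auto
  from tail_deriv[OF hI1[of 0] I1cont[of c] this] show ?thesis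
    by (rule DERIV_subset) (use assms Tpos in auto)
qed

lemma powr_le1: "0 \<le> u \<Longrightarrow> p \<le> 0 \<Longrightarrow> (1+u) powr p \<le> (1::real)"
  using powr_mono[of p 0 "1+u"] by simp

lemma I2abs_cont: "continuous_on {0..b} (\<lambda>u. \<bar>I2 u\<bar>)"
  by (intro continuous_intros I2cont)

lemma I2abs_int: "T \<le> a \<Longrightarrow> (\<lambda>u. \<bar>I2 u\<bar>) integrable_on {a..c}"
  by (intro integrable_continuous_real cont_T[OF I2abs_cont]) auto

lemma I1_bound: obtains C3 where "C3 \<ge> 0" "\<And>t. t \<ge> 0 \<Longrightarrow> \<bar>I1 t\<bar> \<le> C3 * (1+t) powr (-\<gamma>)"
proof -
  obtain C3 where C3: "\<forall>t\<ge>0. \<bar>I1 t\<bar> \<le> C3 * (1+t) powr (-\<gamma>)" using SAp(11) by blast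
  have "0 \<le> C3" using C3[rule_format, of 0] by simp
  then show ?thesis using that C3 by blast
qed

lemma zone_pos:
  assumes "\<alpha> \<ge> 0"
  obtains C where "C \<ge> 0" "\<And>c. c \<ge> T \<Longrightarrow> integral {T..c} (\<lambda>u. \<bar>I2 u\<bar>) \<le> C * (1+c) powr \<alpha>"
    "\<And>t. t \<ge> 0 \<Longrightarrow> integral {0..t} (\<lambda>u. \<bar>I2 u\<bar>) \<le> C * (1+t) powr \<alpha>"
proof -
  obtain C where C: "\<forall>t\<ge>0. integral {0..t} (\<lambda>s. \<bar>I2 s\<bar>) \<le> C * (1 + t) powr \<alpha>"
    using SAp(8) assms by blast
  have C0: "0 \<le> C" using C[rule_format, of 0] by simp
  have "integral {T..c} (\<lambda>u. \<bar>I2 u\<bar>) \<le> C * (1+c) powr \<alpha>" if c: "c \<ge> T" for c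
  proof -
    have int: "(\<lambda>u. \<bar>I2 u\<bar>) integrable_on {0..c}"
      by (intro integrable_continuous_real I2abs_cont)
    have "integral {0..T} (\<lambda>u. \<bar>I2 u\<bar>) + integral {T..c} (\<lambda>u. \<bar>I2 u\<bar>) = integral {0..c} (\<lambda>u. \<bar>I2 u\<bar>)"
      using Henstock_Kurzweil_Integration.integral_combine[OF _ c int] Tpos by simp
    moreover have "0 \<le> integral {0..T} (\<lambda>u. \<bar>I2 u\<bar>)"
      by (intro integral_nonneg integrable_continuous_real I2abs_cont) auto
    ultimately show ?thesis using C[rule_format, of c] c Tpos by simp
  qed
  then show ?thesis using that C0 C by blast
qed

lemma zone_nonpos:
  assumes "\<alpha> \<le> 0"
  obtains C where "C \<ge> 0" "\<And>a c. T \<le> a \<Longrightarrow> a \<le> c \<Longrightarrow> integral {a..c} (\<lambda>u. \<bar>I2 u\<bar>) \<le> C * (1+a) powr \<alpha>"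
    "has_tail (\<lambda>u. \<bar>I2 u\<bar>) T"
proof -
  obtain C where C: "\<forall>t\<ge>0. has_tail (\<lambda>s. \<bar>I2 s\<bar>) t \<and> tail (\<lambda>s. \<bar>I2 s\<bar>) t \<le> C * (1 + t) powr \<alpha>"
    using SAp(9) assms by blast
  have "0 \<le> tail (\<lambda>s. \<bar>I2 s\<bar>) 0" using C by (intro tail_nonneg) auto
  then have C0: "0 \<le> C" using C[rule_format, of 0] by simp
  have "integral {a..c} (\<lambda>u. \<bar>I2 u\<bar>) \<le> C * (1+a) powr \<alpha>" if a: "T \<le> a" "a \<le> c" for a c
  proof -
    have a0: "a \<ge> 0" using a Tpos by simp
    have "integral {a..c} (\<lambda>u. \<bar>I2 u\<bar>) \<le> tail (\<lambda>s. \<bar>I2 s\<bar>) a"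
      using C a0 a by (intro integral_le_tail) auto
    then show ?thesis using C a0 by auto
  qed
  moreover have "has_tail (\<lambda>u. \<bar>I2 u\<bar>) T" using C Tpos by auto
  ultimately show ?thesis using that C0 by blast
qed

lemma gam_gt_alpha: "\<alpha> > 0 \<Longrightarrow> \<alpha> < \<gamma>"
  using SAp(3) SAp(5) by auto

lemma dpow:
  assumes "u \<ge> 0"
  shows "((\<lambda>u. (1+u) powr p) has_real_derivative p * (1+u) powr (p - 1)) (at u within S)"
proof -
  have "((\<lambda>u. (1+u) powr p) has_real_derivative p * (1+u) powr (p - of_nat 1) * 1) (at u)"
    by (rule DERIV_fun_powr) (auto intro!: derivative_eq_intros simp: assms add_pos_nonneg)
  then show ?thesis by (simp add: has_field_derivative_at_within)
qed

lemma K21_pos: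
  assumes al: "\<alpha> > 0" and C3: "C3 \<ge> 0" "\<And>t. t \<ge> 0 \<Longrightarrow> \<bar>I1 t\<bar> \<le> C3 * (1+t) powr (-\<gamma>)"
  shows "\<exists>K. \<forall>c\<ge>T. integral {T..c} (\<lambda>u. \<bar>I1 u\<bar> * \<bar>I2 u\<bar>) \<le> K"
proof -
  obtain C1 where C10: "C1 \<ge> 0" and C1: "\<And>t. t \<ge> 0 \<Longrightarrow> integral {0..t} (\<lambda>u. \<bar>I2 u\<bar>) \<le> C1 * (1+t) powr \<alpha>"
    using zone_pos[of thesis] al by auto
  have ga: "\<alpha> < \<gamma>" using gam_gt_alpha al by simp
  define Kc where "Kc = C1 * \<gamma> / (\<gamma> - \<alpha>)"
  have Kc0: "Kc \<ge> 0" unfolding Kc_def using C10 ga SAp(4) by simp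
  define F where "F u = integral {0..u} (\<lambda>s. \<bar>I2 s\<bar>)" for u
  define Psi where "Psi u = F u * (1+u) powr (-\<gamma>) - Kc * (1+u) powr (\<alpha>-\<gamma>)" for u
  define Psi' where "Psi' u = \<bar>I2 u\<bar> * (1+u) powr (-\<gamma>) + F u * ((-\<gamma>) * (1+u) powr (-\<gamma>-1))
       - Kc * ((\<alpha>-\<gamma>) * (1+u) powr (\<alpha>-\<gamma>-1))" for u
  have main: "integral {T..c} (\<lambda>u. \<bar>I2 u\<bar> * (1+u) powr (-\<gamma>)) \<le> C1 + Kc" if c: "c \<ge> T" for c
  proof -
    have dPsi: "(Psi has_vector_derivative Psi' u) (at u within {T..c})" if u: "u \<in> {T..c}" for u
    proof -
      have u0: "u \<ge> 0" using u Tpos by simp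
      have dF: "(F has_real_derivative \<bar>I2 u\<bar>) (at u within {T..c})"
      proof -
        have "(F has_real_derivative \<bar>I2 u\<bar>) (at u within {0..c})"
          unfolding F_def by (rule integral_has_real_derivative[OF I2abs_cont]) (use u Tpos in auto)
        then show ?thesis by (rule DERIV_subset) (use Tpos in auto)
      qed
      have d1: "((\<lambda>u. F u * (1+u) powr (-\<gamma>)) has_real_derivative \<bar>I2 u\<bar> * (1+u) powr (-\<gamma>) + F u * ((-\<gamma>) * (1+u) powr (-\<gamma>-1))) (at u within {T..c})"
        by (rule DERIV_cong[OF DERIV_mult[OF dF dpow[OF u0]]]) (simp add: algebra_simps)
      have d2: "((\<lambda>u. Kc * (1+u) powr (\<alpha>-\<gamma>)) has_real_derivative Kc * ((\<alpha>-\<gamma>) * (1+u) powr (\<alpha>-\<gamma>-1))) (at u within {T..c})"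
        by (rule DERIV_cmult[OF dpow[OF u0]])
      have "(Psi has_real_derivative Psi' u) (at u within {T..c})"
        unfolding Psi_def[abs_def] Psi'_def by (rule DERIV_diff[OF d1 d2])
      then show ?thesis by (simp add: has_real_derivative_iff_has_vector_derivative)
    qed
    have I: "(Psi' has_integral (Psi c - Psi T)) {T..c}"
      by (rule fundamental_theorem_of_calculus[OF c dPsi]) auto
    have hint: "(\<lambda>u. \<bar>I2 u\<bar> * (1+u) powr (-\<gamma>)) integrable_on {T..c}"
      using Tpos by (intro integrable_continuous_real continuous_intros cont_T[OF I2abs_cont]) auto
    have le: "\<bar>I2 u\<bar> * (1+u) powr (-\<gamma>) \<le> Psi' u" if u: "u \<in> {T..c}" for u
    proof -
      have u0: "u \<ge> 0" using u Tpos by simp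
      have "F u * (\<gamma> * (1+u) powr (-\<gamma>-1)) \<le> (C1 * (1+u) powr \<alpha>) * (\<gamma> * (1+u) powr (-\<gamma>-1))"
        using C1[OF u0] SAp(4) unfolding F_def by (intro mult_right_mono) auto
      also have "\<dots> = C1 * \<gamma> * (1+u) powr (\<alpha>-\<gamma>-1)"
        using u0 by (simp add: powr_add[symmetric] algebra_simps)
      also have "\<dots> = - Kc * ((\<alpha>-\<gamma>) * (1+u) powr (\<alpha>-\<gamma>-1))"
        unfolding Kc_def using ga by (simp add: field_simps)
      finally show ?thesis unfolding Psi'_def by simp
    qed
    have "integral {T..c} (\<lambda>u. \<bar>I2 u\<bar> * (1+u) powr (-\<gamma>)) \<le> Psi c - Psi T"
      by (rule has_integral_le[OF integrable_integral[OF hint] I le])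
    also have "\<dots> \<le> C1 + Kc"
    proof -
      have c0: "c \<ge> 0" using c Tpos by simp
      have "F c * (1+c) powr (-\<gamma>) \<le> (C1 * (1+c) powr \<alpha>) * (1+c) powr (-\<gamma>)"
        using C1[OF c0] unfolding F_def by (intro mult_right_mono) auto
      also have "\<dots> = C1 * (1+c) powr (\<alpha> - \<gamma>)" using c0 by (simp add: powr_add[symmetric])
      also have "\<dots> \<le> C1 * 1" using C10 powr_le1[OF c0, of "\<alpha>-\<gamma>"] ga by (intro mult_left_mono) auto
      finally have A: "F c * (1+c) powr (-\<gamma>) \<le> C1" by simp
      have B: "0 \<le> F T * (1+T) powr (-\<gamma>)" unfolding F_def
        by (intro mult_nonneg_nonneg integral_nonneg integrable_continuous_real I2abs_cont) auto
      have Cc: "0 \<le> Kc * (1+c) powr (\<alpha>-\<gamma>)" using Kc0 by simp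
      have D: "Kc * (1+T) powr (\<alpha>-\<gamma>) \<le> Kc * 1" using Kc0 powr_le1[of T "\<alpha>-\<gamma>"] Tpos ga
        by (intro mult_left_mono) auto
      show ?thesis unfolding Psi_def using A B Cc D by linarith
    qed
    finally show ?thesis .
  qed
  have "integral {T..c} (\<lambda>u. \<bar>I1 u\<bar> * \<bar>I2 u\<bar>) \<le> C3 * (C1 + Kc)" if c: "c \<ge> T" for c
  proof -
    have "integral {T..c} (\<lambda>u. \<bar>I1 u\<bar> * \<bar>I2 u\<bar>) \<le> integral {T..c} (\<lambda>u. C3 * (\<bar>I2 u\<bar> * (1+u) powr (-\<gamma>)))"
    proof (rule integral_le)
      show "(\<lambda>u. \<bar>I1 u\<bar> * \<bar>I2 u\<bar>) integrable_on {T..c}"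
        using Tpos by (intro integrable_continuous_real continuous_intros cont_T[OF I1cont] cont_T[OF I2cont]) auto
      show "(\<lambda>u. C3 * (\<bar>I2 u\<bar> * (1+u) powr (-\<gamma>))) integrable_on {T..c}"
        using Tpos by (intro integrable_continuous_real continuous_intros cont_T[OF I2abs_cont]) auto
      fix u assume u: "u \<in> {T..c}"
      then have u0: "u \<ge> 0" using Tpos by simp
      have "\<bar>I1 u\<bar> * \<bar>I2 u\<bar> \<le> (C3 * (1+u) powr (-\<gamma>)) * \<bar>I2 u\<bar>"
        using C3(2)[OF u0] by (intro mult_right_mono) auto
      then show "\<bar>I1 u\<bar> * \<bar>I2 u\<bar> \<le> C3 * (\<bar>I2 u\<bar> * (1+u) powr (-\<gamma>))" by (simp add: mult_ac)
    qed
    also have "\<dots> = C3 * integral {T..c} (\<lambda>u. \<bar>I2 u\<bar> * (1+u) powr (-\<gamma>))" by simp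
    also have "\<dots> \<le> C3 * (C1 + Kc)" using main[OF c] C3(1) by (intro mult_left_mono) auto
    finally show ?thesis .
  qed
  then show ?thesis by blast
qed

lemma K21_exists:
  obtains K21 where "K21 \<ge> 0" "\<And>c. c \<ge> T \<Longrightarrow> integral {T..c} (\<lambda>u. \<bar>I1 u\<bar> * \<bar>I2 u\<bar>) \<le> K21"
proof -
  obtain C3 where C3: "C3 \<ge> 0" "\<And>t. t \<ge> 0 \<Longrightarrow> \<bar>I1 t\<bar> \<le> C3 * (1+t) powr (-\<gamma>)"
    using I1_bound by blast
  have "\<exists>K. \<forall>c\<ge>T. integral {T..c} (\<lambda>u. \<bar>I1 u\<bar> * \<bar>I2 u\<bar>) \<le> K"
  proof (cases "\<alpha> > 0")
    case True
    then show ?thesis using K21_pos[OF True C3] by blast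
  next
    case False
    then obtain Cz where ht: "has_tail (\<lambda>u. \<bar>I2 u\<bar>) T" using zone_nonpos[of thesis] by auto
    have "integral {T..c} (\<lambda>u. \<bar>I1 u\<bar> * \<bar>I2 u\<bar>) \<le> C3 * tail (\<lambda>u. \<bar>I2 u\<bar>) T" if c: "c \<ge> T" for c
    proof -
      have "integral {T..c} (\<lambda>u. \<bar>I1 u\<bar> * \<bar>I2 u\<bar>) \<le> integral {T..c} (\<lambda>u. C3 * \<bar>I2 u\<bar>)"
      proof (rule integral_le)
        show "(\<lambda>u. \<bar>I1 u\<bar> * \<bar>I2 u\<bar>) integrable_on {T..c}"
          using Tpos by (intro integrable_continuous_real continuous_intros cont_T[OF I1cont] cont_T[OF I2cont]) auto
        show "(\<lambda>u. C3 * \<bar>I2 u\<bar>) integrable_on {T..c}"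
          using Tpos by (intro integrable_continuous_real continuous_intros cont_T[OF I2abs_cont]) auto
        fix u assume u: "u \<in> {T..c}"
        then have u0: "u \<ge> 0" using Tpos by simp
        have p: "(1+u) powr (-\<gamma>) \<le> 1" using powr_le1[OF u0, of "-\<gamma>"] SAp(4) by simp
        have "C3 * (1+u) powr (-\<gamma>) \<le> C3 * 1" using C3(1) p by (intro mult_left_mono) auto
        then have "\<bar>I1 u\<bar> \<le> C3" using C3(2)[OF u0] by simp
        then show "\<bar>I1 u\<bar> * \<bar>I2 u\<bar> \<le> C3 * \<bar>I2 u\<bar>" by (intro mult_right_mono) auto
      qed
      also have "\<dots> = C3 * integral {T..c} (\<lambda>u. \<bar>I2 u\<bar>)" by simp
      also have "\<dots> \<le> C3 * tail (\<lambda>u. \<bar>I2 u\<bar>) T"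
        using C3(1) integral_le_tail[OF ht _ c] by (intro mult_left_mono) auto
      finally show ?thesis .
    qed
    then show ?thesis by blast
  qed
  then obtain K where K: "\<And>c. c \<ge> T \<Longrightarrow> integral {T..c} (\<lambda>u. \<bar>I1 u\<bar> * \<bar>I2 u\<bar>) \<le> K" by blast
  have "0 \<le> K" using K[of T] by simp
  then show ?thesis using that K by blast
qed

lemma main_est:
  fixes W :: "real \<Rightarrow> complex^2"
  assumes K21: "\<And>c. c \<ge> T \<Longrightarrow> integral {T..c} (\<lambda>u. \<bar>I1 u\<bar> * \<bar>I2 u\<bar>) \<le> K21" "K21 \<ge> 0"
    and a: "T \<le> a" "a \<le> c" and r: "0 \<le> r"
    and ode: "\<And>t. t \<ge> T \<Longrightarrow> (W has_vector_derivative (sysmat (bcoef M) r t *v W t)) (at t within {T..})"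
    and rho: "r * integral {a..c} (\<lambda>u. \<bar>I2 u\<bar>) \<le> \<rho>"
  shows "norm (W c) \<le> exp (24 + 4*K21 + 4*\<rho>) * norm (W a) \<and> norm (W a) \<le> exp (24 + 4*K21 + 4*\<rho>) * norm (W c)"
proof -
  define x1 where "x1 t = Re (W t $ 1)" for t
  define y1 where "y1 t = Im (W t $ 1)" for t
  define x2 where "x2 t = Re (W t $ 2)" for t
  define y2 where "y2 t = Im (W t $ 2)" for t
  define E where "E u = x1 u^2 + y1 u^2 + x2 u^2 + y2 u^2" for u
  define Kt where "Kt = 24 + 4*K21 + 4*\<rho>"
  have nW: "norm (W u) = sqrt (E u)" for u unfolding E_def x1_def y1_def x2_def y2_def by (rule norm_c2)
  have E0: "0 \<le> E u" for u unfolding E_def by simp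
  have odes: "(W has_vector_derivative (sysmat (bcoef M) r u *v W u)) (at u within {a..c})" if "u \<in> {a..c}" for u
    by (rule has_vector_derivative_within_subset[OF ode]) (use that a in auto)
  note oc = ode_components[OF odes]
  have dx1: "(x1 has_real_derivative (-2*bcoef M u*x1 u - r*y2 u)) (at u within {a..c})" if "u \<in> {a..c}" for u
    using oc(1)[OF that] unfolding x1_def[abs_def] y2_def by simp
  have dy1: "(y1 has_real_derivative (-2*bcoef M u*y1 u + r*x2 u)) (at u within {a..c})" if "u \<in> {a..c}" for u
    using oc(2)[OF that] unfolding y1_def[abs_def] x2_def by simp
  have dx2: "(x2 has_real_derivative (- r*y1 u)) (at u within {a..c})" if "u \<in> {a..c}" for u
    using oc(3)[OF that] unfolding x2_def[abs_def] y1_def by simp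
  have dy2: "(y2 has_real_derivative (r*x1 u)) (at u within {a..c})" if "u \<in> {a..c}" for u
    using oc(4)[OF that] unfolding y2_def[abs_def] x1_def by simp
  have int_nn: "0 \<le> integral {a..c} (\<lambda>u. \<bar>I2 u\<bar>)"
    using a by (intro integral_nonneg I2abs_int) auto
  have rho0: "0 \<le> \<rho>" using rho r int_nn by (meson mult_nonneg_nonneg order_trans)
  have Kt0: "0 \<le> Kt" unfolding Kt_def using rho0 K21 by simp
  have key: "E c \<le> exp Kt * E a \<and> E a \<le> exp Kt * E c"
  proof (cases "\<forall>u\<in>{a..c}. 0 < E u")
    case True
    have contJ: "continuous_on {a..c} (\<lambda>u. 2 * J u)" using a by (intro continuous_intros cont_T[OF Jcont]) auto
    have contI1: "continuous_on {a..c} I1" using a by (intro cont_T[OF I1cont]) auto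
    have contI2: "continuous_on {a..c} I2" using a by (intro cont_T[OF I2cont]) auto
    have hb: "\<bar>bcoef M u + I1 u\<bar> \<le> 2 * J u" if "u \<in> {a..c}" for u
      using b_bound[of u] that a by auto
    have I2b: "\<bar>I2 u\<bar> \<le> 1" if "u \<in> {a..c}" for u using I2_le1[of u] that a by auto
    have C: "\<bar>ln (E c) - ln (E a)\<bar> \<le> 8 + integral {a..c} (\<lambda>u. 8*(2 * J u) + 4*\<bar>I1 u\<bar>*\<bar>I2 u\<bar> + 4*r*\<bar>I2 u\<bar>)"
      unfolding E_def
      by (rule core[OF a(2) r dx1 dy1 dx2 dy2 dI2[OF a(1)] I2b hb contJ contI1 contI2])
         (use True in \<open>auto simp: E_def\<close>)
    have iJ: "(\<lambda>u. J u) integrable_on {a..c}"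
      using a by (intro integrable_continuous_real cont_T[OF Jcont]) auto
    have iII: "(\<lambda>u. \<bar>I1 u\<bar>*\<bar>I2 u\<bar>) integrable_on {a..c}"
      using a by (intro integrable_continuous_real continuous_intros cont_T[OF I1cont] cont_T[OF I2cont]) auto
    have iI2: "(\<lambda>u. \<bar>I2 u\<bar>) integrable_on {a..c}" using a by (intro I2abs_int) auto
    have split: "integral {a..c} (\<lambda>u. 8*(2 * J u) + 4*\<bar>I1 u\<bar>*\<bar>I2 u\<bar> + 4*r*\<bar>I2 u\<bar>)
        = 16 * integral {a..c} J + 4 * integral {a..c} (\<lambda>u. \<bar>I1 u\<bar>*\<bar>I2 u\<bar>) + 4 * (r * integral {a..c} (\<lambda>u. \<bar>I2 u\<bar>))"
    proof -
      have "integral {a..c} (\<lambda>u. 8*(2 * J u) + 4*\<bar>I1 u\<bar>*\<bar>I2 u\<bar> + 4*r*\<bar>I2 u\<bar>)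
          = integral {a..c} (\<lambda>u. 16 * J u + 4 * (\<bar>I1 u\<bar>*\<bar>I2 u\<bar>) + (4*r) * \<bar>I2 u\<bar>)"
        by (simp add: mult_ac)
      also have "\<dots> = integral {a..c} (\<lambda>u. 16 * J u) + integral {a..c} (\<lambda>u. 4 * (\<bar>I1 u\<bar>*\<bar>I2 u\<bar>)) + integral {a..c} (\<lambda>u. (4*r) * \<bar>I2 u\<bar>)"
      proof -
        have i1: "(\<lambda>u. 16 * J u) integrable_on {a..c}" using iJ by (rule integrable_on_mult_right)
        have i2: "(\<lambda>u. 4 * (\<bar>I1 u\<bar>*\<bar>I2 u\<bar>)) integrable_on {a..c}" using iII by (rule integrable_on_mult_right)
        have i3: "(\<lambda>u. (4*r) * \<bar>I2 u\<bar>) integrable_on {a..c}" using iI2 by (rule integrable_on_mult_right)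
        show ?thesis
          using integral_add[OF integrable_add[OF i1 i2] i3] integral_add[OF i1 i2] by simp
      qed
      also have "\<dots> = 16 * integral {a..c} J + 4 * integral {a..c} (\<lambda>u. \<bar>I1 u\<bar>*\<bar>I2 u\<bar>) + 4 * (r * integral {a..c} (\<lambda>u. \<bar>I2 u\<bar>))"
        by simp
      finally show ?thesis .
    qed
    have a0: "a \<ge> 0" using a Tpos by simp
    have bJ: "integral {a..c} J \<le> 1"
    proof -
      have "integral {a..c} J \<le> tail J a"
        using hJ[OF a0] J_nonneg a0 a by (intro integral_le_tail) auto
      also have "\<dots> \<le> eps0^2" using phi_le a by auto
      also have "\<dots> \<le> 1" by (simp add: eps0_def power2_eq_square)
      finally show ?thesis .
    qed
    have bII: "integral {a..c} (\<lambda>u. \<bar>I1 u\<bar>*\<bar>I2 u\<bar>) \<le> K21"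
    proof -
      have iT: "(\<lambda>u. \<bar>I1 u\<bar>*\<bar>I2 u\<bar>) integrable_on {T..c}"
        using a by (intro integrable_continuous_real continuous_intros cont_T[OF I1cont] cont_T[OF I2cont]) auto
      have "integral {T..a} (\<lambda>u. \<bar>I1 u\<bar>*\<bar>I2 u\<bar>) + integral {a..c} (\<lambda>u. \<bar>I1 u\<bar>*\<bar>I2 u\<bar>) = integral {T..c} (\<lambda>u. \<bar>I1 u\<bar>*\<bar>I2 u\<bar>)"
        using Henstock_Kurzweil_Integration.integral_combine[OF a iT] .
      moreover have "0 \<le> integral {T..a} (\<lambda>u. \<bar>I1 u\<bar>*\<bar>I2 u\<bar>)"
        using a by (intro integral_nonneg integrable_continuous_real continuous_intros cont_T[OF I1cont] cont_T[OF I2cont]) auto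
      ultimately show ?thesis using K21(1)[of c] a by simp
    qed
    have lnb: "\<bar>ln (E c) - ln (E a)\<bar> \<le> Kt"
      using C split bJ bII rho unfolding Kt_def by linarith
    have Ea: "0 < E a" "0 < E c" using True a by auto
    have "E c = exp (ln (E c))" using Ea by simp
    also have "\<dots> \<le> exp (Kt + ln (E a))" using lnb by simp
    also have "\<dots> = exp Kt * E a" using Ea by (simp add: exp_add)
    finally have A: "E c \<le> exp Kt * E a" .
    have "E a = exp (ln (E a))" using Ea by simp
    also have "\<dots> \<le> exp (Kt + ln (E c))" using lnb by simp
    also have "\<dots> = exp Kt * E c" using Ea by (simp add: exp_add)
    finally show ?thesis using A by simp
  next
    case False
    then obtain u0 where u0': "u0 \<in> {a..c}" "\<not> 0 < E u0" by blast
    then have u0: "u0 \<in> {a..c}" "E u0 = 0" using E0[of u0] by auto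
    have contB: "continuous_on {a..c} (\<lambda>u. \<bar>I1 u\<bar> + 2 * J u)"
      using a by (intro continuous_intros cont_T[OF I1cont] cont_T[OF Jcont]) auto
    obtain B0 where B0: "B0 \<ge> 0" "\<And>u. u \<in> {a..c} \<Longrightarrow> norm (\<bar>I1 u\<bar> + 2 * J u) \<le> B0"
      using continuous_on_compact_bound[OF compact_Icc contB] by blast
    have dE: "(E has_real_derivative (-4*bcoef M u*(x1 u^2 + y1 u^2))) (at u within {a..c})" if "u \<in> {a..c}" for u
      unfolding E_def[abs_def] by (rule E_deriv[where pa=x1 and qa=y1 and pb=x2 and qb=y2 and bb="bcoef M" and r=r and u=u and S="{a..c}", OF dx1[OF that] dy1[OF that] dx2[OF that] dy2[OF that]])
    have bd: "\<bar>-4*bcoef M u*(x1 u^2 + y1 u^2)\<bar> \<le> (4*B0) * E u" if u: "u \<in> {a..c}" for u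
    proof -
      have "\<bar>bcoef M u\<bar> \<le> B0" using b_bound[of u] B0(2)[OF u] u a by auto
      moreover have "x1 u^2 + y1 u^2 \<le> E u" unfolding E_def by simp
      ultimately have "\<bar>bcoef M u\<bar> * (x1 u^2 + y1 u^2) \<le> B0 * E u"
        by (intro mult_mono) auto
      then show ?thesis by (simp add: abs_mult)
    qed
    have z: "E u = 0" if "u \<in> {a..c}" for u
      by (rule gronwall_zero[OF a(2) _ dE bd E0 u0 that]) (use B0 in auto)
    then show ?thesis using a by auto
  qed
  have sq: "sqrt (exp Kt) \<le> exp Kt"
  proof -
    have "1 \<le> exp Kt" using Kt0 by simp
    then have "exp Kt \<le> exp Kt * exp Kt" by simp
    then have "sqrt (exp Kt) \<le> sqrt (exp Kt * exp Kt)" by (rule real_sqrt_le_mono)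
    then show ?thesis by simp
  qed
  have fin: "sqrt (E x) \<le> exp Kt * sqrt (E y)" if "E x \<le> exp Kt * E y" for x y
  proof -
    have "sqrt (E x) \<le> sqrt (exp Kt * E y)" using that by (rule real_sqrt_le_mono)
    also have "\<dots> = sqrt (exp Kt) * sqrt (E y)" by (simp add: real_sqrt_mult)
    also have "\<dots> \<le> exp Kt * sqrt (E y)" using sq E0[of y] by (intro mult_right_mono) auto
    finally show ?thesis .
  qed
  show ?thesis unfolding nW Kt_def[symmetric] using fin key by blast
qed

end


lemma zone_neg_facts:
  fixes \<alpha> N r t T :: real
  assumes al: "\<alpha> < 0" and r: "r > 0" and N: "N > 0" and t: "t \<ge> T" "T > 0"
    and z: "(1+t) powr \<alpha> * r \<le> N"
  defines "a \<equiv> max T ((N / r) powr (1/\<alpha>) - 1)"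
  shows "T \<le> a" "a \<le> t" "r * (1+a) powr \<alpha> \<le> N"
proof -
  show "T \<le> a" unfolding a_def by simp
  have p1: "(1+t) powr \<alpha> \<le> N / r" using z r by (simp add: field_simps)
  have p0: "0 < (1+t) powr \<alpha>" using t by simp
  have "(N / r) powr (1/\<alpha>) \<le> ((1+t) powr \<alpha>) powr (1/\<alpha>)"
    by (rule powr_mono2'[OF _ p0 p1]) (use al in \<open>simp add: divide_le_0_iff\<close>)
  also have "\<dots> = 1 + t" using al t by (simp add: powr_powr)
  finally show "a \<le> t" unfolding a_def using t by simp
  have q0: "0 < (N / r) powr (1/\<alpha>)" using N r by simp
  have q1: "(N / r) powr (1/\<alpha>) \<le> 1 + a" unfolding a_def by simp
  have "(1+a) powr \<alpha> \<le> ((N / r) powr (1/\<alpha>)) powr \<alpha>"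
    by (rule powr_mono2'[OF _ q0 q1]) (use al in simp)
  also have "\<dots> = N / r" using al N r by (simp add: powr_powr)
  finally show "r * (1+a) powr \<alpha> \<le> N" using r by (simp add: field_simps)
qed

theorem proposition2:
  fixes M :: "real \<Rightarrow> real" and \<alpha> \<beta> \<gamma> T N :: real
    and W :: "real^'n \<Rightarrow> real \<Rightarrow> complex^2"
  assumes "standing_assumptions M \<alpha> \<beta> \<gamma>"
    and "admissible_T M T"
    and "N > 0"
    and "\<And>\<xi> t. t \<ge> T \<Longrightarrow>
           (W \<xi> has_vector_derivative (sysmat (bcoef M) (norm \<xi>) t *v W \<xi> t)) (at t within {T..})"
  shows "\<exists>K2>0. \<forall>t \<xi>. in_Zpsi \<alpha> T N t \<xi> \<and> \<xi> \<noteq> 0 \<longrightarrow>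
           (\<alpha> > 0 \<longrightarrow> norm (W \<xi> T) / K2 \<le> norm (W \<xi> t) \<and> norm (W \<xi> t) \<le> K2 * norm (W \<xi> T)) \<and>
           (\<alpha> \<le> 0 \<longrightarrow> norm (W \<xi> (t_xi \<alpha> T N \<xi>)) / K2 \<le> norm (W \<xi> t) \<and>
                      norm (W \<xi> t) \<le> K2 * norm (W \<xi> (t_xi \<alpha> T N \<xi>)))"
proof -
  interpret S: setting M \<alpha> \<beta> \<gamma> T by unfold_locales (rule assms(1), rule assms(2))
  obtain K21 where K21: "K21 \<ge> 0" "\<And>c. c \<ge> T \<Longrightarrow> integral {T..c} (\<lambda>u. \<bar>S.I1 u\<bar> * \<bar>S.I2 u\<bar>) \<le> K21"
    using S.K21_exists by blast
  obtain Cm where Cm0: "Cm \<ge> 0"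
    and Zp: "\<alpha> > 0 \<Longrightarrow> (\<forall>c\<ge>T. integral {T..c} (\<lambda>u. \<bar>S.I2 u\<bar>) \<le> Cm * (1+c) powr \<alpha>)"
    and Zn: "\<alpha> \<le> 0 \<Longrightarrow> (\<forall>a c. T \<le> a \<longrightarrow> a \<le> c \<longrightarrow> integral {a..c} (\<lambda>u. \<bar>S.I2 u\<bar>) \<le> Cm * (1+a) powr \<alpha>)"
  proof (cases "\<alpha> > 0")
    case True
    obtain C where "C \<ge> 0" "\<And>c. c \<ge> T \<Longrightarrow> integral {T..c} (\<lambda>u. \<bar>S.I2 u\<bar>) \<le> C * (1+c) powr \<alpha>"
      using S.zone_pos[of thesis] True by auto
    then show ?thesis using that True by auto
  next
    case False
    obtain C where "C \<ge> 0" "\<And>a c. T \<le> a \<Longrightarrow> a \<le> c \<Longrightarrow> integral {a..c} (\<lambda>u. \<bar>S.I2 u\<bar>) \<le> C * (1+a) powr \<alpha>"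
      using S.zone_nonpos[of thesis] False by auto
    then show ?thesis using that False by auto
  qed
  define K2 where "K2 = exp (24 + 4*K21 + 4*(N*Cm))"
  have K2pos: "K2 > 0" unfolding K2_def by simp
  have fin: "norm (W \<xi> a) / K2 \<le> norm (W \<xi> t) \<and> norm (W \<xi> t) \<le> K2 * norm (W \<xi> a)"
    if a: "T \<le> a" "a \<le> t" and rho: "norm \<xi> * integral {a..t} (\<lambda>u. \<bar>S.I2 u\<bar>) \<le> N * Cm" for \<xi> a t
  proof -
    have "norm (W \<xi> t) \<le> K2 * norm (W \<xi> a) \<and> norm (W \<xi> a) \<le> K2 * norm (W \<xi> t)"
      using S.main_est[where W="W \<xi>" and r="norm \<xi>" and a=a and c=t and \<rho>="N*Cm", OF K21(2) K21(1) a norm_ge_zero assms(4) rho]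
      unfolding K2_def by blast
    then show ?thesis using K2pos by (simp add: divide_le_eq mult.commute)
  qed
  show ?thesis
  proof (rule exI[of _ K2], rule conjI[OF K2pos], intro allI impI)
    fix t and \<xi> :: "real^'n"
    assume H: "in_Zpsi \<alpha> T N t \<xi> \<and> \<xi> \<noteq> 0"
    then have t: "t \<ge> T" and z: "(1+t) powr \<alpha> * norm \<xi> \<le> N" and r: "norm \<xi> > 0"
      unfolding in_Zpsi_def by auto
    have T0: "T > 0" using S.Tpos .
    have A: "norm (W \<xi> T) / K2 \<le> norm (W \<xi> t) \<and> norm (W \<xi> t) \<le> K2 * norm (W \<xi> T)" if al: "\<alpha> > 0"
    proof -
      have "norm \<xi> * integral {T..t} (\<lambda>u. \<bar>S.I2 u\<bar>) \<le> norm \<xi> * (Cm * (1+t) powr \<alpha>)"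
        using Zp[OF al] t r by (intro mult_left_mono) auto
      also have "\<dots> = Cm * ((1+t) powr \<alpha> * norm \<xi>)" by simp
      also have "\<dots> \<le> Cm * N" using z Cm0 by (intro mult_left_mono) auto
      finally show ?thesis
        using fin[of T t \<xi>] t by (simp add: mult.commute)
    qed
    have B: "norm (W \<xi> (t_xi \<alpha> T N \<xi>)) / K2 \<le> norm (W \<xi> t) \<and>
                      norm (W \<xi> t) \<le> K2 * norm (W \<xi> (t_xi \<alpha> T N \<xi>))" if al: "\<alpha> \<le> 0"
    proof -
      define a where "a = t_xi \<alpha> T N \<xi>"
      have aprops: "T \<le> a \<and> a \<le> t \<and> norm \<xi> * (1+a) powr \<alpha> \<le> N"
      proof (cases "\<alpha> = 0")
        case True
        then have "a = T" unfolding a_def t_xi_def by simp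
        moreover have "norm \<xi> \<le> N" using z True t T0 by simp
        ultimately show ?thesis using t T0 True by simp
      next
        case False
        then have al': "\<alpha> < 0" using al by simp
        have "a = max T ((N / norm \<xi>) powr (1/\<alpha>) - 1)" unfolding a_def t_xi_def using False by simp
        then show ?thesis using zone_neg_facts[OF al' r assms(3) t T0 z] by simp
      qed
      have "norm \<xi> * integral {a..t} (\<lambda>u. \<bar>S.I2 u\<bar>) \<le> norm \<xi> * (Cm * (1+a) powr \<alpha>)"
        using Zn[OF al] aprops r by (intro mult_left_mono) auto
      also have "\<dots> = Cm * (norm \<xi> * (1+a) powr \<alpha>)" by simp
      also have "\<dots> \<le> Cm * N" using aprops Cm0 by (intro mult_left_mono) auto
      finally have "norm \<xi> * integral {a..t} (\<lambda>u. \<bar>S.I2 u\<bar>) \<le> N * Cm" by (simp add: mult.commute)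
      then show ?thesis
        using fin[of a t \<xi>] aprops unfolding a_def by blast
    qed
    show "(\<alpha> > 0 \<longrightarrow> norm (W \<xi> T) / K2 \<le> norm (W \<xi> t) \<and> norm (W \<xi> t) \<le> K2 * norm (W \<xi> T)) \<and>
           (\<alpha> \<le> 0 \<longrightarrow> norm (W \<xi> (t_xi \<alpha> T N \<xi>)) / K2 \<le> norm (W \<xi> t) \<and>
                      norm (W \<xi> t) \<le> K2 * norm (W \<xi> (t_xi \<alpha> T N \<xi>)))"
      using A B by blast
  qed
qed


end
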